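(* Let $\kappa,\kappa'$ be symmetric weights and $m\ge1$ an integer with $\kappa\equiv\kappa'\bmod p^m(p-1)$ in $\mathbb{Z}^{rn}$. Assume (i) $\min(\kappa^\tau_i-\kappa^\tau_{i+1},\kappa'^\tau_i-\kappa'^\tau_{i+1})>m$ for all $\tau\in\Sigma$ and $1\le i<a_{+\tau}$ with $\kappa^\tau_i-\kappa^\tau_{i+1}\ne\kappa'^\tau_i-\kappa'^\tau_{i+1}$; and (ii) $\min(\kappa^\tau_{a_{+\tau}},\kappa'^\tau_{a_{+\tau}})>m$ for all $\tau\in\Sigma$ with $\kappa^\tau_{a_{+\tau}}\ne\kappa'^\tau_{a_{+\tau}}$. Then $\theta^\kappa\equiv\theta^{\kappa'}\bmod p^{m+1}$, i.e. $\theta^\kappa(f)-\theta^{\kappa'}(f)\in p^{m+1}\mathbb W[[t_l\mid l\in\mathfrak E^\vee]]$ for all $f$.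
   Context: $K^+$ totally real of degree $r$, $K$ CM, $\Sigma$ a CM type ($|\Sigma|=r$), $p>n$ a prime split completely in $K$, $\mathbb W=W(\overline{\mathbb F}_p)$, signature $(a_{+\tau},a_{-\tau})_{\tau\in\Sigma}$ with $a_{+\tau}+a_{-\tau}=n$. A weight $\kappa=(\kappa^\tau_i)_{\tau\in\Sigma,1\le i\le n}\in\mathbb{Z}^{rn}$ is positive dominant if $\kappa^\tau_i\ge\kappa^\tau_{i+1}$ for $i\ne a_{+\tau}$ and all $\kappa^\tau_i\ge0$; sum-symmetric if moreover $\sum_{i\le a_{+\tau}}\kappa^\tau_i=\sum_{i>a_{+\tau}}\kappa^\tau_i$ for all $\tau$ (depth $e=\sum_\tau\sum_{i\le a_{+\tau}}\kappa^\tau_i$); symmetric if sum-symmetric and $\kappa^\tau_i=\kappa^\tau_{a_{+\tau}+i}$ for $1\le i\le\min(a_{+\tau},a_{-\tau})$. Let $\mathfrak E^\vee=\{l^\tau_{i,j}:\tau\in\Sigma,1\le i\le a_{+\tau}<j\le n\}$ index the variables of $\mathbb W[[t_l\mid l\in\mathfrak E^\vee]]$ (the Serre–Tate coordinates at an ordinary point, $\mathcal R$), $\theta_l:=(1+t_l)\partial/\partial t_l$ (these commute). Let $\mathcal L=\oplus_\tau(\mathcal L^+_\tau\oplus\mathcal L^-_\tau)$ free with bases $\mathfrak b_{\tau,1..a_{+\tau}}$ of $\mathcal L^+_\tau$ and $\mathfrak b_{\tau,a_{+\tau}+1..n}$ of $\mathcal L^-_\tau$, $l^\tau_{i,j}$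 identified with the dual of $\mathfrak b_{\tau,i}\otimes\mathfrak b_{\tau,j}$. For sum-symmetric $\kappa$ of depth $e$, $\tilde\ell^\kappa_{\rm can}=\prod(\kappa^\tau_i!)^{-1}\bigotimes_{\tau,i}(\mathfrak b^\vee_{\tau,i})^{\otimes\kappa^\tau_i}\cdot c_\kappa$, $c_\kappa$ the generalized Young symmetrizer (product of Young symmetrizers of the partitions $(\kappa^\tau_1,\dots,\kappa^\tau_{a_{+\tau}})$ and $(\kappa^\tau_{a_{+\tau}+1},\dots,\kappa^\tau_n)$ acting on the right by permuting tensor factors); restricted to $(\oplus_\tau\mathcal L^+_\tau\otimes\mathcal L^-_\tau)^{\otimes e}$ it equals $\sum_{\underline l\in(\mathfrak E^\vee)^e}a_{\kappa,\underline l}\underline l$ with $a_{\kappa,\underline l}\in\{0,\pm1\}$. The operator $\theta^\kappa$ on $\mathbb W[[t_l]]$ is $\theta^\kappa=\sum_{\underline l=(l_1,\dots,l_e)}a_{\kappa,\underline l}\,\theta_{l_e}\circ\cdots\circ\theta_{l_1}$. *)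

theory Defs
  imports "HOL-Combinatorics.Combinatorics" "HOL-Number_Theory.Cong"
begin

text \<open>CM type Sigma is indexed by tau in {0..<r}; a tau is a_{+tau}; weights
  kappa :: nat => nat => int, kappa tau i for tau < r and 1 <= i <= n.
  Serre-Tate variables l^tau_{i,j} are triples (tau,i,j).\<close>

type_synonym var = "nat \<times> nat \<times> nat"

definition Evee :: "nat \<Rightarrow> nat \<Rightarrow> (nat \<Rightarrow> nat) \<Rightarrow> var set" where
  "Evee r n a = {(t,i,j). t < r \<and> 1 \<le> i \<and> i \<le> a t \<and> a t < j \<and> j \<le> n}"

definition pos_dominant :: "nat \<Rightarrow> nat \<Rightarrow> (nat \<Rightarrow> nat) \<Rightarrow> (nat \<Rightarrow> nat \<Rightarrow> int) \<Rightarrow> bool" where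
  "pos_dominant r n a k \<longleftrightarrow>
     (\<forall>t<r. (\<forall>i. 1 \<le> i \<and> i < n \<and> i \<noteq> a t \<longrightarrow> k t i \<ge> k t (i+1))
          \<and> (\<forall>i. 1 \<le> i \<and> i \<le> n \<longrightarrow> k t i \<ge> 0))"

definition sum_symmetric :: "nat \<Rightarrow> nat \<Rightarrow> (nat \<Rightarrow> nat) \<Rightarrow> (nat \<Rightarrow> nat \<Rightarrow> int) \<Rightarrow> bool" where
  "sum_symmetric r n a k \<longleftrightarrow> pos_dominant r n a k \<and>
     (\<forall>t<r. (\<Sum>i=1..a t. k t i) = (\<Sum>i=a t + 1..n. k t i))"

definition symmetric_weight :: "nat \<Rightarrow> nat \<Rightarrow> (nat \<Rightarrow> nat) \<Rightarrow> (nat \<Rightarrow> nat \<Rightarrow> int) \<Rightarrow> bool" where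
  "symmetric_weight r n a k \<longleftrightarrow> sum_symmetric r n a k \<and>
     (\<forall>t<r. \<forall>i. 1 \<le> i \<and> i \<le> min (a t) (n - a t) \<longrightarrow> k t i = k t (a t + i))"

definition depth_tau :: "(nat \<Rightarrow> nat) \<Rightarrow> (nat \<Rightarrow> nat \<Rightarrow> int) \<Rightarrow> nat \<Rightarrow> nat" where
  "depth_tau a k t = nat (\<Sum>i=1..a t. k t i)"

definition depth :: "nat \<Rightarrow> (nat \<Rightarrow> nat) \<Rightarrow> (nat \<Rightarrow> nat \<Rightarrow> int) \<Rightarrow> nat" where
  "depth r a k = (\<Sum>t<r. depth_tau a k t)"

definition offset :: "(nat \<Rightarrow> nat) \<Rightarrow> (nat \<Rightarrow> nat \<Rightarrow> int) \<Rightarrow> nat \<Rightarrow> nat" where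
  "offset a k t = (\<Sum>s<t. depth_tau a k s)"

definition lam_plus :: "(nat \<Rightarrow> nat) \<Rightarrow> (nat \<Rightarrow> nat \<Rightarrow> int) \<Rightarrow> nat \<Rightarrow> nat list" where
  "lam_plus a k t = map (\<lambda>i. nat (k t i)) [1..<a t + 1]"

definition lam_minus :: "nat \<Rightarrow> (nat \<Rightarrow> nat) \<Rightarrow> (nat \<Rightarrow> nat \<Rightarrow> int) \<Rightarrow> nat \<Rightarrow> nat list" where
  "lam_minus n a k t = map (\<lambda>i. nat (k t i)) [a t + 1..<n + 1]"

text \<open>Positions 0..<|lam| of the Young diagram of lam are filled row by row.\<close>
definition row_start :: "nat list \<Rightarrow> nat \<Rightarrow> nat" where
  "row_start lam i = sum_list (take i lam)"

definition row_of :: "nat list \<Rightarrow> nat \<Rightarrow> nat" where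
  "row_of lam q = (LEAST i. q < row_start lam (Suc i))"

definition col_of :: "nat list \<Rightarrow> nat \<Rightarrow> nat" where
  "col_of lam q = q - row_start lam (row_of lam q)"

definition row_group :: "nat list \<Rightarrow> (nat \<Rightarrow> nat) set" where
  "row_group lam = {s. s permutes {0..<sum_list lam} \<and> (\<forall>q. row_of lam (s q) = row_of lam q)}"

definition col_group :: "nat list \<Rightarrow> (nat \<Rightarrow> nat) set" where
  "col_group lam = {s. s permutes {0..<sum_list lam} \<and> (\<forall>q. col_of lam (s q) = col_of lam q)}"

text \<open>Coefficient of the pure tensor b^vee_{v(0)} (x) ... (x) b^vee_{v(d-1)} in
  (prod_i (lam_i)!)^{-1} * (b^vee_{lab 0})^{lam_0} (x) ... . c_lam, where
  c_lam = (sum_{s in R} s)(sum_{p in C} sign p p) acts on the right by permuting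
  tensor factors: (x_0 (x) ... (x) x_{d-1}).g = x_{g 0} (x) ... (x) x_{g (d-1)}.
  Row i of the diagram carries the label lab i.  The division is exact.\<close>
definition young_coef :: "nat list \<Rightarrow> (nat \<Rightarrow> nat) \<Rightarrow> (nat \<Rightarrow> nat) \<Rightarrow> int" where
  "young_coef lam lab v =
     (\<Sum>s\<in>row_group lam. \<Sum>p\<in>col_group lam.
        if (\<forall>q<sum_list lam. lab (row_of lam (s (p q))) = v q) then sign p else 0)
     div (\<Prod>i<length lam. fact (lam ! i))"

text \<open>The tensor
  (x)_{tau,i} (b^vee_{tau,i})^{kappa_i} . c_kappa is restricted to
  (+)_tau L^+_tau (x) L^-_tau by pairing, inside the tau-block, the q-th factor
  of (L^+_tau)^{(x) e_tau} with the q-th factor of (L^-_tau)^{(x) e_tau}; the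
  tau-blocks occupy consecutive slots in the order tau = 0, 1, ... .\<close>
definition a_coef :: "nat \<Rightarrow> nat \<Rightarrow> (nat \<Rightarrow> nat) \<Rightarrow> (nat \<Rightarrow> nat \<Rightarrow> int) \<Rightarrow> (nat \<Rightarrow> var) \<Rightarrow> int" where
  "a_coef r n a k l =
    (if (\<forall>t<r. \<forall>q<depth_tau a k t. fst (l (offset a k t + q)) = t)
     then (\<Prod>t<r.
             young_coef (lam_plus a k t) (\<lambda>i. i + 1)
                (\<lambda>q. fst (snd (l (offset a k t + q))))
           * young_coef (lam_minus n a k t) (\<lambda>i. a t + 1 + i)
                (\<lambda>q. snd (snd (l (offset a k t + q)))))
     else 0)"

text \<open>Formal power series in the variables t_l: coefficient functions on
  exponent vectors (only exponents supported in Evee are meaningful).\<close>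
type_synonym 'c pseries = "(var \<Rightarrow> nat) \<Rightarrow> 'c"

text \<open>theta_l = (1 + t_l) d/dt_l on coefficients.\<close>
definition theta_var :: "var \<Rightarrow> 'c::comm_ring_1 pseries \<Rightarrow> 'c pseries" where
  "theta_var l f = (\<lambda>\<alpha>. of_nat (\<alpha> l + 1) * f (\<alpha>(l := \<alpha> l + 1)) + of_nat (\<alpha> l) * f \<alpha>)"

fun theta_seq :: "(nat \<Rightarrow> var) \<Rightarrow> nat \<Rightarrow> 'c::comm_ring_1 pseries \<Rightarrow> 'c pseries" where
  "theta_seq l 0 f = f"
| "theta_seq l (Suc q) f = theta_var (l q) (theta_seq l q f)"

definition theta_kappa :: "nat \<Rightarrow> nat \<Rightarrow> (nat \<Rightarrow> nat) \<Rightarrow> (nat \<Rightarrow> nat \<Rightarrow> int)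
    \<Rightarrow> 'c::comm_ring_1 pseries \<Rightarrow> 'c pseries" where
  "theta_kappa r n a k f = (\<lambda>\<alpha>.
     \<Sum>l\<in>({0..<depth r a k} \<rightarrow>\<^sub>E Evee r n a).
        of_int (a_coef r n a k l) * theta_seq l (depth r a k) f \<alpha>)"

end

theory Submission
  imports Defs "HOL-Number_Theory.Number_Theory"
begin


definition Mv :: "var \<Rightarrow> 'c::comm_ring_1 pseries \<Rightarrow> 'c pseries" where
  "Mv v g = (\<lambda>\<alpha>. g \<alpha> + (if 0 < \<alpha> v then g (\<alpha>(v := \<alpha> v - 1)) else 0))"

definition Dv :: "var \<Rightarrow> nat \<Rightarrow> 'c::comm_ring_1 pseries \<Rightarrow> 'c pseries" where
  "Dv v j g = (\<lambda>\<alpha>. of_nat ((\<alpha> v + j) choose j) * g (\<alpha>(v := \<alpha> v + j)))"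

definition Ev :: "var \<Rightarrow> nat \<Rightarrow> 'c::comm_ring_1 pseries \<Rightarrow> 'c pseries" where
  "Ev v j g = (Mv v ^^ j) (Dv v j g)"

fun EL :: "var list \<Rightarrow> (var \<Rightarrow> nat) \<Rightarrow> 'c::comm_ring_1 pseries \<Rightarrow> 'c pseries" where
  "EL [] J g = g"
| "EL (v # vs) J g = Ev v (J v) (EL vs J g)"

lemma theta_MD: "theta_var v g = Mv v (Dv v 1 g)"
  by (auto simp: theta_var_def Mv_def Dv_def fun_eq_iff)

lemma Mv_lin: "Mv v (\<lambda>\<alpha>. a * f \<alpha> + b * g \<alpha>) = (\<lambda>\<alpha>. a * Mv v f \<alpha> + b * Mv v g \<alpha>)"
  by (auto simp: Mv_def fun_eq_iff algebra_simps)

lemma Dv_lin: "Dv v j (\<lambda>\<alpha>. a * f \<alpha> + b * g \<alpha>) = (\<lambda>\<alpha>. a * Dv v j f \<alpha> + b * Dv v j g \<alpha>)"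
  by (auto simp: Dv_def fun_eq_iff algebra_simps)

lemma Mvpow_lin: "(Mv v ^^ j) (\<lambda>\<alpha>. a * f \<alpha> + b * g \<alpha>) = (\<lambda>\<alpha>. a * (Mv v ^^ j) f \<alpha> + b * (Mv v ^^ j) g \<alpha>)"
  by (induction j) (auto simp: Mv_lin)

lemma Ev_lin: "Ev v j (\<lambda>\<alpha>. a * f \<alpha> + b * g \<alpha>) = (\<lambda>\<alpha>. a * Ev v j f \<alpha> + b * Ev v j g \<alpha>)"
  by (simp add: Ev_def Dv_lin Mvpow_lin)

lemma Mvpow_add: "(Mv v ^^ j) (\<lambda>\<alpha>. f \<alpha> + g \<alpha>) = (\<lambda>\<alpha>. (Mv v ^^ j) f \<alpha> + (Mv v ^^ j) g \<alpha>)"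
  using Mvpow_lin[where a=1 and b=1 and f=f and g=g] by simp

lemma Mvpow_smult: "(Mv v ^^ j) (\<lambda>\<alpha>. a * f \<alpha>) = (\<lambda>\<alpha>. a * (Mv v ^^ j) f \<alpha>)"
  using Mvpow_lin[where a=a and b=0 and f=f and g=f] by simp

lemma Mv_add: "Mv v (\<lambda>\<alpha>. f \<alpha> + g \<alpha>) = (\<lambda>\<alpha>. Mv v f \<alpha> + Mv v g \<alpha>)"
  using Mv_lin[of v 1 f 1 g] by simp

lemma Mv_smult: "Mv v (\<lambda>\<alpha>. a * f \<alpha>) = (\<lambda>\<alpha>. a * Mv v f \<alpha>)"
  using Mv_lin[of v a f 0 f] by simp

lemma D1_M: "Dv v 1 (Mv v g) = (\<lambda>\<alpha>. Mv v (Dv v 1 g) \<alpha> + g \<alpha>)"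
proof
  fix \<alpha> :: "var \<Rightarrow> nat"
  show "Dv v 1 (Mv v g) \<alpha> = Mv v (Dv v 1 g) \<alpha> + g \<alpha>"
  proof (cases "\<alpha> v = 0")
    case True
    then show ?thesis by (simp add: Dv_def Mv_def fun_upd_idem)
  next
    case False
    then have "\<alpha>(v := \<alpha> v - 1 + 1) = \<alpha>" by auto
    with False show ?thesis
      by (simp add: Dv_def Mv_def fun_upd_idem algebra_simps of_nat_diff)
  qed
qed

lemma binom_aux: "(a + 1) * ((a + 1 + j) choose j) = (j + 1) * ((a + j + 1) choose (j + 1))"
proof -
  have 1: "Suc (a + j) * ((a + j) choose a) = (Suc (a + j) choose Suc a) * Suc a"
    by (rule Suc_times_binomial_eq)
  have 2: "Suc (a + j) * ((a + j) choose j) = (Suc (a + j) choose Suc j) * Suc j"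
    by (rule Suc_times_binomial_eq)
  have 3: "(a + j) choose a = (a + j) choose j"
    using binomial_symmetric[of a "a+j"] by simp
  have 4: "(Suc (a + j) choose Suc a) = (Suc (a + j) choose j)"
    using binomial_symmetric[of "Suc a" "Suc (a+j)"] by simp
  have "(a + 1) * ((a + 1 + j) choose j) = (Suc (a + j) choose Suc a) * Suc a"
    using 4 by (simp only: Suc_eq_plus1 add.commute add.left_commute mult.commute)
  also have "\<dots> = Suc (a + j) * ((a + j) choose j)" using 1 3 by simp
  also have "\<dots> = (j + 1) * ((a + j + 1) choose (j + 1))"
    using 2 by (simp only: Suc_eq_plus1 add.commute add.left_commute mult.commute)
  finally show ?thesis .
qed

lemma D1_Dj: "Dv v 1 (Dv v j g) = (\<lambda>\<alpha>. of_nat (j + 1) * Dv v (j + 1) g \<alpha>)"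
proof
  fix \<alpha> :: "var \<Rightarrow> nat"
  have c: "(of_nat (\<alpha> v + 1) * (of_nat ((\<alpha> v + 1 + j) choose j)) :: 'a::comm_ring_1)
        = of_nat (j + 1) * of_nat ((\<alpha> v + j + 1) choose (j + 1))"
    by (metis binom_aux of_nat_mult)
  have e: "(\<alpha>(v := \<alpha> v + 1))(v := (\<alpha>(v := \<alpha> v + 1)) v + j) = \<alpha>(v := \<alpha> v + (j+1))" by simp
  have "Dv v 1 (Dv v j g) \<alpha> = of_nat (\<alpha> v + 1) * (of_nat ((\<alpha> v + 1 + j) choose j) * g (\<alpha>(v := \<alpha> v + (j+1))))"
    unfolding Dv_def by (simp only: fun_upd_same fun_upd_upd choose_one add.assoc add.commute[of 1 j])
  also have "\<dots> = of_nat (j + 1) * (of_nat ((\<alpha> v + (j + 1)) choose (j + 1)) * g (\<alpha>(v := \<alpha> v + (j+1))))"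
    using c by (simp only: mult.assoc[symmetric] add.assoc)
  finally show "Dv v 1 (Dv v j g) \<alpha> = (of_nat (j + 1) * Dv v (j + 1) g \<alpha> :: 'a)"
    by (simp only: Dv_def)
qed

lemma MDMj: "Mv v (Dv v 1 ((Mv v ^^ j) h)) = (\<lambda>\<alpha>. (Mv v ^^ Suc j) (Dv v 1 h) \<alpha> + of_nat j * (Mv v ^^ j) h \<alpha>)"
proof (induction j)
  case 0
  then show ?case by simp
next
  case (Suc j)
  have "Mv v (Dv v 1 ((Mv v ^^ Suc j) h)) = Mv v (Dv v 1 (Mv v ((Mv v ^^ j) h)))" by simp
  also have "\<dots> = Mv v (\<lambda>\<alpha>. Mv v (Dv v 1 ((Mv v ^^ j) h)) \<alpha> + (Mv v ^^ j) h \<alpha>)"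
    by (simp only: D1_M)
  also have "\<dots> = Mv v (\<lambda>\<alpha>. 1 * (Mv v ^^ Suc j) (Dv v 1 h) \<alpha> + (of_nat j + 1) * (Mv v ^^ j) h \<alpha>)"
    by (simp only: Suc.IH) (simp add: algebra_simps)
  also have "\<dots> = (\<lambda>\<alpha>. 1 * Mv v ((Mv v ^^ Suc j) (Dv v 1 h)) \<alpha> + (of_nat j + 1) * Mv v ((Mv v ^^ j) h) \<alpha>)"
    by (rule Mv_lin)
  also have "\<dots> = (\<lambda>\<alpha>. (Mv v ^^ Suc (Suc j)) (Dv v 1 h) \<alpha> + of_nat (Suc j) * (Mv v ^^ Suc j) h \<alpha>)"
    by (simp add: algebra_simps)
  finally show ?case .
qed

lemma theta_Ev: "theta_var v (Ev v j h) = (\<lambda>\<alpha>. of_nat j * Ev v j h \<alpha> + of_nat (j + 1) * Ev v (j + 1) h \<alpha>)"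
proof -
  have "theta_var v (Ev v j h) = Mv v (Dv v 1 ((Mv v ^^ j) (Dv v j h)))"
    by (simp add: theta_MD Ev_def)
  also have "\<dots> = (\<lambda>\<alpha>. (Mv v ^^ Suc j) (Dv v 1 (Dv v j h)) \<alpha> + of_nat j * (Mv v ^^ j) (Dv v j h) \<alpha>)"
    by (rule MDMj)
  also have "(Mv v ^^ Suc j) (Dv v 1 (Dv v j h)) = (\<lambda>\<alpha>. of_nat (j + 1) * Ev v (j + 1) h \<alpha>)"
    by (simp only: D1_Dj Mvpow_smult Ev_def Suc_eq_plus1)
  finally show ?thesis by (simp add: Ev_def algebra_simps)
qed

lemma theta_Mv_comm: "u \<noteq> v \<Longrightarrow> theta_var u (Mv v g) = Mv v (theta_var u g)"
  by (auto simp: theta_var_def Mv_def fun_eq_iff fun_upd_twist algebra_simps)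

lemma theta_Dv_comm: "u \<noteq> v \<Longrightarrow> theta_var u (Dv v j g) = Dv v j (theta_var u g)"
  by (auto simp: theta_var_def Dv_def fun_eq_iff fun_upd_twist algebra_simps)

lemma theta_Mvpow_comm: "u \<noteq> v \<Longrightarrow> theta_var u ((Mv v ^^ j) g) = (Mv v ^^ j) (theta_var u g)"
  by (induction j) (auto simp: theta_Mv_comm)

lemma theta_Ev_comm: "u \<noteq> v \<Longrightarrow> theta_var u (Ev v j g) = Ev v j (theta_var u g)"
  by (simp add: Ev_def theta_Mvpow_comm theta_Dv_comm)

lemma EL_cong: "(\<And>v. v \<in> set vs \<Longrightarrow> J v = J' v) \<Longrightarrow> EL vs J g = EL vs J' g"
  by (induction vs) auto

lemma Ev_0: "Ev v 0 h = h"
  by (simp add: Ev_def Dv_def fun_eq_iff)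

lemma EL_0: "EL vs (\<lambda>_. 0) h = h"
  by (induction vs) (auto simp: Ev_0)

lemma theta_EL:
  assumes "u \<in> set vs" "distinct vs"
  shows "theta_var u (EL vs J h) = (\<lambda>\<alpha>. of_nat (J u) * EL vs J h \<alpha> + of_nat (J u + 1) * EL vs (J(u := J u + 1)) h \<alpha>)"
  using assms
proof (induction vs)
  case Nil
  then show ?case by simp
next
  case (Cons v vs)
  show ?case
  proof (cases "v = u")
    case True
    with Cons.prems have "u \<notin> set vs" by auto
    then have e: "EL vs (J(u := J u + 1)) h = EL vs J h"
      by (intro EL_cong) auto
    show ?thesis unfolding True EL.simps fun_upd_same e theta_Ev by simp
  next
    case False
    with Cons.prems have "u \<in> set vs" "distinct vs" by auto
    then have ih: "theta_var u (EL vs J h) = (\<lambda>\<alpha>. of_nat (J u) * EL vs J h \<alpha> + of_nat (J u + 1) * EL vs (J(u := J u + 1)) h \<alpha>)"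
      by (rule Cons.IH)
    have "theta_var u (EL (v # vs) J h) = Ev v (J v) (theta_var u (EL vs J h))"
      using False by (simp add: theta_Ev_comm)
    also have "\<dots> = (\<lambda>\<alpha>. of_nat (J u) * Ev v (J v) (EL vs J h) \<alpha> + of_nat (J u + 1) * Ev v (J v) (EL vs (J(u := J u + 1)) h) \<alpha>)"
      by (simp only: ih Ev_lin)
    moreover have "(J(u := J u + 1)) v = J v" using False by simp
    ultimately show ?thesis by (simp only: EL.simps)
  qed
qed


section \<open>Boxes of exponents and binomial-basis operators\<close>

definition Box :: "var set \<Rightarrow> nat \<Rightarrow> (var \<Rightarrow> nat) set" where
  "Box S D = {J. \<forall>v. (v \<in> S \<longrightarrow> J v \<in> {..D}) \<and> (v \<notin> S \<longrightarrow> J v = 0)}"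

lemma finite_Box: "finite S \<Longrightarrow> finite (Box S D)"
  unfolding Box_def by (rule finite_set_of_finite_funs) auto

lemma Box_iff: "J \<in> Box S D \<longleftrightarrow> (\<forall>v. (v \<in> S \<longrightarrow> J v \<le> D) \<and> (v \<notin> S \<longrightarrow> J v = 0))"
  by (auto simp: Box_def)

definition Xmul :: "var \<Rightarrow> ((var \<Rightarrow> nat) \<Rightarrow> int) \<Rightarrow> ((var \<Rightarrow> nat) \<Rightarrow> int)" where
  "Xmul u c = (\<lambda>J. int (J u) * c J + (if 0 < J u then int (J u) * c (J(u := J u - 1)) else 0))"

lemma shift_sum:
  fixes g :: "(var \<Rightarrow> nat) \<Rightarrow> 'b::comm_ring_1"
  assumes fin: "finite S" and u: "u \<in> S"
    and van: "\<And>J. J \<in> Box S D \<Longrightarrow> J u = D \<Longrightarrow> c J = 0"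
  shows "(\<Sum>J\<in>Box S D. of_int (Xmul u c J) * g J)
       = (\<Sum>J\<in>Box S D. of_int (c J) * (of_nat (J u) * g J + of_nat (J u + 1) * g (J(u := J u + 1))))"
proof -
  let ?B = "Box S D"
  have finB: "finite ?B" using fin by (rule finite_Box)
  have A: "(\<Sum>J\<in>?B. (if 0 < J u then of_nat (J u) * of_int (c (J(u := J u - 1))) * g J else 0))
      = (\<Sum>J\<in>{J\<in>?B. 0 < J u}. of_nat (J u) * of_int (c (J(u := J u - 1))) * g J)"
    by (simp only: sum.inter_filter[OF finB])
  also have "\<dots> = (\<Sum>J\<in>{J\<in>?B. J u < D}. of_int (c J) * of_nat (J u + 1) * g (J(u := J u + 1)))"
  proof (rule sum.reindex_bij_witness[where i = "\<lambda>J. J(u := J u + 1)" and j = "\<lambda>J. J(u := J u - 1)"])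
    fix J assume J: "J \<in> {J\<in>?B. 0 < J u}"
    then show "(J(u := J u - 1))(u := (J(u := J u - 1)) u + 1) = J" by auto
    from J have "J \<in> ?B" "0 < J u" by auto
    then have "J u \<le> D" "0 < J u" using u unfolding Box_iff by blast+
    then show "J(u := J u - 1) \<in> {J\<in>?B. J u < D}"
      using J u by (auto simp: Box_iff)
  next
    fix J assume J: "J \<in> {J\<in>?B. J u < D}"
    then show "(J(u := J u + 1))(u := (J(u := J u + 1)) u - 1) = J" by auto
    show "J(u := J u + 1) \<in> {J\<in>?B. 0 < J u}"
      using J u by (auto simp: Box_iff)
  next
    fix J assume J: "J \<in> {J\<in>?B. 0 < J u}"
    then have "(J(u := J u - 1))(u := (J(u := J u - 1)) u + 1) = J" "J u - 1 + 1 = J u" by auto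
    then show "of_int (c (J(u := J u - 1))) * of_nat ((J(u := J u - 1)) u + 1) * g ((J(u := J u - 1))(u := (J(u := J u - 1)) u + 1))
          = of_nat (J u) * of_int (c (J(u := J u - 1))) * g J"
      by (simp only: fun_upd_same) (simp add: algebra_simps)
  qed
  also have "\<dots> = (\<Sum>J\<in>?B. of_int (c J) * of_nat (J u + 1) * g (J(u := J u + 1)))"
  proof (rule sum.mono_neutral_left[OF finB])
    show "{J \<in> ?B. J u < D} \<subseteq> ?B" by auto
    show "\<forall>J\<in>?B - {J \<in> ?B. J u < D}. of_int (c J) * of_nat (J u + 1) * g (J(u := J u + 1)) = 0"
    proof
      fix J assume J: "J \<in> ?B - {J \<in> ?B. J u < D}"
      then have "J \<in> ?B" "\<not> J u < D" by auto
      moreover then have "J u \<le> D" using u unfolding Box_iff by blast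
      ultimately have "J \<in> ?B" "J u = D" by auto
      then show "of_int (c J) * of_nat (J u + 1) * g (J(u := J u + 1)) = 0" using van by simp
    qed
  qed
  finally have A': "(\<Sum>J\<in>?B. (if 0 < J u then of_nat (J u) * of_int (c (J(u := J u - 1))) * g J else 0))
      = (\<Sum>J\<in>?B. of_int (c J) * of_nat (J u + 1) * g (J(u := J u + 1)))" .
  have "(\<Sum>J\<in>?B. of_int (Xmul u c J) * g J)
      = (\<Sum>J\<in>?B. of_int (c J) * of_nat (J u) * g J) + (\<Sum>J\<in>?B. (if 0 < J u then of_nat (J u) * of_int (c (J(u := J u - 1))) * g J else 0))"
    unfolding sum.distrib[symmetric] by (rule sum.cong) (auto simp: Xmul_def algebra_simps)
  also have "\<dots> = (\<Sum>J\<in>?B. of_int (c J) * of_nat (J u) * g J) + (\<Sum>J\<in>?B. of_int (c J) * of_nat (J u + 1) * g (J(u := J u + 1)))"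
    by (simp only: A')
  also have "\<dots> = (\<Sum>J\<in>?B. of_int (c J) * (of_nat (J u) * g J + of_nat (J u + 1) * g (J(u := J u + 1))))"
    by (simp add: sum.distrib[symmetric] algebra_simps)
  finally show ?thesis .
qed

definition Op :: "var list \<Rightarrow> var set \<Rightarrow> nat \<Rightarrow> ((var \<Rightarrow> nat) \<Rightarrow> int) \<Rightarrow> 'c::comm_ring_1 pseries \<Rightarrow> 'c pseries" where
  "Op vs S D c f = (\<lambda>\<alpha>. \<Sum>J\<in>Box S D. of_int (c J) * EL vs J f \<alpha>)"

definition ev :: "var set \<Rightarrow> nat \<Rightarrow> ((var \<Rightarrow> nat) \<Rightarrow> int) \<Rightarrow> (var \<Rightarrow> nat) \<Rightarrow> int" where
  "ev S D c x = (\<Sum>J\<in>Box S D. c J * (\<Prod>v\<in>S. int (x v choose J v)))"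

lemma theta_sum: "theta_var u (\<lambda>\<alpha>. \<Sum>J\<in>B. a J * F J \<alpha>) = (\<lambda>\<alpha>. \<Sum>J\<in>B. a J * theta_var u (F J) \<alpha>)"
  by (auto simp: theta_var_def fun_eq_iff sum_distrib_left sum.distrib algebra_simps)

lemma theta_Op:
  assumes "set vs = S" "distinct vs" "u \<in> S" "finite S"
    and van: "\<And>J. J \<in> Box S D \<Longrightarrow> J u = D \<Longrightarrow> c J = 0"
  shows "theta_var u (Op vs S D c f) = Op vs S D (Xmul u c) f"
proof
  fix \<alpha>
  have "theta_var u (Op vs S D c f) \<alpha> = (\<Sum>J\<in>Box S D. of_int (c J) * theta_var u (EL vs J f) \<alpha>)"
    unfolding Op_def by (simp only: theta_sum)
  also have "\<dots> = (\<Sum>J\<in>Box S D. of_int (c J) * (of_nat (J u) * EL vs J f \<alpha> + of_nat (J u + 1) * EL vs (J(u := J u + 1)) f \<alpha>))"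
    using assms by (simp add: theta_EL)
  also have "\<dots> = (\<Sum>J\<in>Box S D. of_int (Xmul u c J) * EL vs J f \<alpha>)"
    by (rule shift_sum[symmetric]) (use assms in auto)
  finally show "theta_var u (Op vs S D c f) \<alpha> = Op vs S D (Xmul u c) f \<alpha>" by (simp add: Op_def)
qed

lemma binom_x: "int x * int (x choose j) = int j * int (x choose j) + int (j + 1) * int (x choose (j + 1))"
proof -
  have a: "(x - j) * (x choose j) = x * ((x - 1) choose j)" by (rule binomial_absorb_comp)
  have b: "Suc j * (x choose Suc j) = x * ((x - 1) choose j)" by (rule binomial_absorption)
  have "x * (x choose j) = j * (x choose j) + (j + 1) * (x choose (j + 1))"
  proof (cases "j \<le> x")
    case True
    then have "x * (x choose j) = j * (x choose j) + (x - j) * (x choose j)"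
      by (metis add_mult_distrib le_add_diff_inverse)
    then show ?thesis using a b by simp
  next
    case False
    then show ?thesis by (simp add: binomial_eq_0)
  qed
  then show ?thesis by (metis of_nat_add of_nat_mult)
qed

lemma ev_Xmul:
  assumes "u \<in> S" "finite S"
    and van: "\<And>J. J \<in> Box S D \<Longrightarrow> J u = D \<Longrightarrow> c J = 0"
  shows "ev S D (Xmul u c) x = int (x u) * ev S D c x"
proof -
  let ?g = "\<lambda>J. (\<Prod>v\<in>S. int (x v choose J v))"
  have g: "int (x u) * ?g J = int (J u) * ?g J + int (J u + 1) * ?g (J(u := J u + 1))" for J
  proof -
    have r: "?g K = int (x u choose K u) * (\<Prod>v\<in>S - {u}. int (x v choose K v))" for K
      using assms by (simp add: prod.remove)
    have "(\<Prod>v\<in>S - {u}. int (x v choose (J(u := J u + 1)) v)) = (\<Prod>v\<in>S - {u}. int (x v choose J v))"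
      by (rule prod.cong) auto
    moreover have "(int (x u) * int (x u choose J u)) * (\<Prod>v\<in>S - {u}. int (x v choose J v))
       = (int (J u) * int (x u choose J u) + int (J u + 1) * int (x u choose (J u + 1))) * (\<Prod>v\<in>S - {u}. int (x v choose J v))"
      using binom_x[of "x u" "J u"] by (rule arg_cong)
    ultimately show ?thesis unfolding r[of J] r[of "J(u := J u + 1)"]
      by (simp add: algebra_simps)
  qed
  have "ev S D (Xmul u c) x = (\<Sum>J\<in>Box S D. of_int (Xmul u c J) * ?g J)"
    by (simp add: ev_def)
  also have "\<dots> = (\<Sum>J\<in>Box S D. of_int (c J) * (of_nat (J u) * ?g J + of_nat (J u + 1) * ?g (J(u := J u + 1))))"
    by (rule shift_sum) (use assms in auto)
  also have "\<dots> = (\<Sum>J\<in>Box S D. c J * (int (x u) * ?g J))"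
    by (simp add: g)
  also have "\<dots> = int (x u) * ev S D c x"
    by (simp add: ev_def sum_distrib_left algebra_simps)
  finally show ?thesis .
qed


fun cseq :: "(nat \<Rightarrow> var) \<Rightarrow> nat \<Rightarrow> (var \<Rightarrow> nat) \<Rightarrow> int" where
  "cseq l 0 = (\<lambda>J. if J = (\<lambda>_. 0) then 1 else 0)"
| "cseq l (Suc q) = Xmul (l q) (cseq l q)"

lemma zero_Box: "(\<lambda>_. 0) \<in> Box S D"
  by (simp add: Box_iff)

lemma Box_mono: "D \<le> D' \<Longrightarrow> J \<in> Box S D \<Longrightarrow> J \<in> Box S D'"
  unfolding Box_iff by (meson le_trans)

lemma cseq_supp: "(\<And>i. i < q \<Longrightarrow> l i \<in> S) \<Longrightarrow> cseq l q J \<noteq> 0 \<Longrightarrow> J \<in> Box S q"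
proof (induction q arbitrary: J)
  case 0
  then show ?case by (auto simp: zero_Box split: if_splits)
next
  case (Suc q)
  let ?u = "l q"
  have u: "?u \<in> S" using Suc.prems by auto
  from Suc.prems(2) have "cseq l q J \<noteq> 0 \<or> (0 < J ?u \<and> cseq l q (J(?u := J ?u - 1)) \<noteq> 0)"
    by (auto simp: Xmul_def split: if_splits)
  then show ?case
  proof
    assume "cseq l q J \<noteq> 0"
    then have "J \<in> Box S q" using Suc by auto
    then show ?thesis by (rule Box_mono[rotated]) simp
  next
    assume a: "0 < J ?u \<and> cseq l q (J(?u := J ?u - 1)) \<noteq> 0"
    then have B: "J(?u := J ?u - 1) \<in> Box S q" using Suc by auto
    show ?thesis unfolding Box_iff
    proof (intro allI conjI impI)
      fix v assume "v \<in> S"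
      with B have "(J(?u := J ?u - 1)) v \<le> q" unfolding Box_iff by blast
      then show "J v \<le> Suc q" by (cases "v = ?u") auto
    next
      fix v assume v: "v \<notin> S"
      from v u have "v \<noteq> ?u" by auto
      moreover from B v have "(J(?u := J ?u - 1)) v = 0" unfolding Box_iff by blast
      ultimately show "J v = 0" by simp
    qed
  qed
qed

lemma cseq_van:
  assumes "\<And>i. i < q \<Longrightarrow> l i \<in> S" "q < D" "J \<in> Box S D" "J u = D" "u \<in> S"
  shows "cseq l q J = 0"
proof (rule ccontr)
  assume "cseq l q J \<noteq> 0"
  then have "J \<in> Box S q" using cseq_supp assms(1) by blast
  then have "J u \<le> q" using assms(5) unfolding Box_iff by blast
  then show False using assms by simp
qed

lemma Op_delta:
  assumes "finite S"
  shows "Op vs S D (cseq l 0) f = f"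
proof
  fix \<alpha>
  have "Op vs S D (cseq l 0) f \<alpha> = (\<Sum>J\<in>Box S D. (if J = (\<lambda>_. 0) then EL vs J f \<alpha> else 0))"
    unfolding Op_def by (rule sum.cong) auto
  also have "\<dots> = EL vs (\<lambda>_. 0) f \<alpha>"
    using finite_Box[OF assms] zero_Box by (simp add: sum.delta')
  finally show "Op vs S D (cseq l 0) f \<alpha> = f \<alpha>" by (simp add: EL_0)
qed

lemma ev_delta:
  assumes "finite S"
  shows "ev S D (cseq l 0) x = 1"
proof -
  have "ev S D (cseq l 0) x = (\<Sum>J\<in>Box S D. (if J = (\<lambda>_. 0) then (\<Prod>v\<in>S. int (x v choose J v)) else 0))"
    unfolding ev_def by (rule sum.cong) auto
  also have "\<dots> = 1"
    using finite_Box[OF assms] zero_Box by (simp add: sum.delta')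
  finally show ?thesis .
qed

lemma theta_seq_Op:
  assumes "set vs = S" "distinct vs" "finite S" "\<And>i. i < q \<Longrightarrow> l i \<in> S" "q \<le> D"
  shows "theta_seq l q f = Op vs S D (cseq l q) f"
  using assms(4,5)
proof (induction q)
  case 0
  then show ?case by (simp only: theta_seq.simps Op_delta[OF assms(3)])
next
  case (Suc q)
  have ih: "theta_seq l q f = Op vs S D (cseq l q) f" using Suc by auto
  have u: "l q \<in> S" using Suc.prems by auto
  have "theta_seq l (Suc q) f = theta_var (l q) (Op vs S D (cseq l q) f)" by (simp add: ih)
  also have "\<dots> = Op vs S D (Xmul (l q) (cseq l q)) f"
  proof (rule theta_Op)
    fix J assume J: "J \<in> Box S D" "J (l q) = D"
    show "cseq l q J = 0" by (rule cseq_van[where D=D and u="l q", OF _ _ J(1) J(2)]) (use Suc.prems u in auto)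
  qed (use assms u in auto)
  finally show ?case by simp
qed

lemma ev_cseq:
  assumes "finite S" "\<And>i. i < q \<Longrightarrow> l i \<in> S" "q \<le> D"
  shows "ev S D (cseq l q) x = (\<Prod>i<q. int (x (l i)))"
  using assms(2,3)
proof (induction q)
  case 0
  then show ?case using ev_delta[OF assms(1)] by simp
next
  case (Suc q)
  have ih: "ev S D (cseq l q) x = (\<Prod>i<q. int (x (l i)))" using Suc by auto
  have u: "l q \<in> S" using Suc.prems by auto
  have "ev S D (cseq l (Suc q)) x = int (x (l q)) * ev S D (cseq l q) x"
  proof -
    have "ev S D (Xmul (l q) (cseq l q)) x = int (x (l q)) * ev S D (cseq l q) x"
    proof (rule ev_Xmul)
      fix J assume J: "J \<in> Box S D" "J (l q) = D"
      show "cseq l q J = 0" by (rule cseq_van[where D=D and u="l q", OF _ _ J(1) J(2)]) (use Suc.prems u in auto)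
    qed (use assms u in auto)
    then show ?thesis by simp
  qed
  then show ?case by (simp add: ih)
qed

lemma lincomb_Op:
  "(\<Sum>l\<in>L. of_int (w l) * Op vs S D (C l) f \<alpha>) = Op vs S D (\<lambda>J. \<Sum>l\<in>L. w l * C l J) f \<alpha>"
  unfolding Op_def by (simp add: sum_distrib_left sum_distrib_right of_int_sum algebra_simps sum.swap[of _ L])

lemma lincomb_ev:
  "(\<Sum>l\<in>L. w l * ev S D (C l) x) = ev S D (\<lambda>J. \<Sum>l\<in>L. w l * C l J) x"
  unfolding ev_def by (simp add: sum_distrib_left sum_distrib_right algebra_simps sum.swap[of _ L])

lemma Op_diff: "Op vs S D c1 f \<alpha> - Op vs S D c2 f \<alpha> = Op vs S D (\<lambda>J. c1 J - c2 J) f \<alpha>"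
  unfolding Op_def by (simp add: sum_subtractf algebra_simps)

lemma ev_diff: "ev S D c1 x - ev S D c2 x = ev S D (\<lambda>J. c1 J - c2 J) x"
  unfolding ev_def by (simp add: sum_subtractf algebra_simps)

lemma Op_dvd:
  assumes "\<And>J. J \<in> Box S D \<Longrightarrow> int N dvd c J"
  shows "\<exists>y. Op vs S D c f \<alpha> = (of_nat N :: 'c::comm_ring_1) * y"
proof -
  have "\<forall>J\<in>Box S D. \<exists>z. c J = int N * z" using assms by (auto simp: dvd_def)
  then obtain z where z: "\<And>J. J \<in> Box S D \<Longrightarrow> c J = int N * z J" by metis
  have "Op vs S D c f \<alpha> = (\<Sum>J\<in>Box S D. of_nat N * (of_int (z J) * EL vs J f \<alpha>))"
    unfolding Op_def by (rule sum.cong) (auto simp: z)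
  also have "\<dots> = of_nat N * (\<Sum>J\<in>Box S D. of_int (z J) * EL vs J f \<alpha>)"
    by (simp add: sum_distrib_left)
  finally show ?thesis by blast
qed

lemma coeff_dvd:
  fixes N :: int
  assumes fin: "finite S" and H: "\<And>x. x \<in> Box S D \<Longrightarrow> N dvd ev S D c x"
  shows "J \<in> Box S D \<Longrightarrow> N dvd c J"
proof (induction "\<Sum>v\<in>S. J v" arbitrary: J rule: less_induct)
  case less
  let ?B = "Box S D"
  let ?g = "\<lambda>I. (\<Prod>v\<in>S. int (J v choose I v))"
  have finB: "finite ?B" using fin by (rule finite_Box)
  have gJ: "?g J = 1" by simp
  have rest: "N dvd c I * ?g I" if I: "I \<in> ?B - {J}" for I
  proof (cases "\<forall>v\<in>S. I v \<le> J v")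
    case True
    from I have "I \<noteq> J" by auto
    then obtain w where "I w \<noteq> J w" by (meson ext)
    moreover have "w \<in> S"
    proof (rule ccontr)
      assume "w \<notin> S"
      moreover have "I \<in> Box S D" using I by simp
      ultimately have "I w = 0" "J w = 0" using less.prems unfolding Box_iff by blast+
      with \<open>I w \<noteq> J w\<close> show False by simp
    qed
    ultimately have lt: "I w < J w" using True by force
    have "(\<Sum>v\<in>S. I v) < (\<Sum>v\<in>S. J v)"
      using fin True lt \<open>w \<in> S\<close> by (intro sum_strict_mono_ex1) auto
    then have "N dvd c I" using less.hyps I by auto
    then show ?thesis by simp
  next
    case False
    then obtain w where "w \<in> S" "J w < I w" by (auto simp: not_le)
    then have "?g I = 0" using fin by (auto simp: binomial_eq_0 intro: prod_zero)
    then show ?thesis by simp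
  qed
  have "ev S D c J = c J * ?g J + (\<Sum>I\<in>?B - {J}. c I * ?g I)"
    unfolding ev_def using finB less.prems by (simp add: sum.remove)
  then have "c J = ev S D c J - (\<Sum>I\<in>?B - {J}. c I * ?g I)" by simp
  moreover have "N dvd ev S D c J" using H less.prems by auto
  moreover have "N dvd (\<Sum>I\<in>?B - {J}. c I * ?g I)" using rest by (intro dvd_sum) auto
  ultimately show ?case by simp
qed




section \<open>Rows of a Young diagram\<close>

lemma rs_0 [simp]: "row_start lam 0 = 0"
  by (simp add: row_start_def)

lemma rs_Suc: "i < length lam \<Longrightarrow> row_start lam (Suc i) = row_start lam i + lam ! i"
  by (simp add: row_start_def take_Suc_conv_app_nth)

lemma rs_ge: "length lam \<le> i \<Longrightarrow> row_start lam i = sum_list lam"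
  by (simp add: row_start_def)

lemma rs_Suc_le: "row_start lam i \<le> row_start lam (Suc i)"
  by (cases "i < length lam") (auto simp: rs_Suc rs_ge)

lemma rs_mono: "i \<le> j \<Longrightarrow> row_start lam i \<le> row_start lam j"
proof (induction j)
  case 0
  then show ?case by simp
next
  case (Suc j)
  show ?case
  proof (cases "i = Suc j")
    case False
    then have "row_start lam i \<le> row_start lam j" using Suc by simp
    then show ?thesis using rs_Suc_le[of lam j] by linarith
  qed simp
qed

lemma rs_le_sum: "row_start lam i \<le> sum_list lam"
  by (metis rs_ge rs_mono nat_le_linear order.refl)

lemma row_of_eq:
  assumes "row_start lam i \<le> q" "q < row_start lam (Suc i)"
  shows "row_of lam q = i"
  unfolding row_of_def
proof (rule Least_equality)
  show "q < row_start lam (Suc i)" by fact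
  fix i' assume "q < row_start lam (Suc i')"
  show "i \<le> i'"
  proof (rule ccontr)
    assume "\<not> i \<le> i'"
    then have "row_start lam (Suc i') \<le> row_start lam i" by (intro rs_mono) auto
    with assms \<open>q < row_start lam (Suc i')\<close> show False by simp
  qed
qed

lemma row_of_props:
  assumes "q < sum_list lam"
  shows "row_of lam q < length lam" "row_start lam (row_of lam q) \<le> q" "q < row_start lam (Suc (row_of lam q))"
proof -
  have ne: "lam \<noteq> []" using assms by auto
  have ex: "q < row_start lam (Suc (length lam - 1))" using assms ne by (simp add: rs_ge)
  let ?i = "row_of lam q"
  show 3: "q < row_start lam (Suc ?i)" unfolding row_of_def by (rule LeastI[of "\<lambda>i. q < row_start lam (Suc i)", OF ex])
  have "?i \<le> length lam - 1" unfolding row_of_def by (rule Least_le[of "\<lambda>i. q < row_start lam (Suc i)", OF ex])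
  then show "?i < length lam" using ne by (cases lam) auto
  show "row_start lam ?i \<le> q"
  proof (cases ?i)
    case 0
    then show ?thesis by simp
  next
    case (Suc i')
    have "\<not> q < row_start lam (Suc i')"
    proof
      assume "q < row_start lam (Suc i')"
      then have "?i \<le> i'" unfolding row_of_def by (rule Least_le)
      then show False using Suc by simp
    qed
    then show ?thesis using Suc by simp
  qed
qed

lemma col_of_lt:
  assumes "q < sum_list lam"
  shows "col_of lam q < lam ! row_of lam q"
  using row_of_props[OF assms] rs_Suc[of "row_of lam q" lam] by (simp add: col_of_def)

lemma col_of_le: "col_of lam q \<le> q"
  by (simp add: col_of_def)

lemma pos_props:
  assumes "i < length lam" "c < lam ! i"
  shows "row_of lam (row_start lam i + c) = i" "col_of lam (row_start lam i + c) = c"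
    "row_start lam i + c < sum_list lam"
proof -
  have s: "row_start lam (Suc i) = row_start lam i + lam ! i" using assms by (simp add: rs_Suc)
  show r: "row_of lam (row_start lam i + c) = i" by (rule row_of_eq) (use s assms in auto)
  show "col_of lam (row_start lam i + c) = c" by (simp add: col_of_def r)
  show "row_start lam i + c < sum_list lam" using s assms rs_le_sum[of lam "Suc i"] by simp
qed

section \<open>Block permutations\<close>

definition blockperm :: "'a set \<Rightarrow> ('a \<Rightarrow> 'i) \<Rightarrow> ('a \<Rightarrow> 'a) set" where
  "blockperm A g = {s. s permutes A \<and> (\<forall>q. g (s q) = g q)}"

definition blk :: "'a set \<Rightarrow> ('a \<Rightarrow> 'i) \<Rightarrow> 'i \<Rightarrow> 'a set" where
  "blk A g j = {q \<in> A. g q = j}"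

definition glue :: "'a set \<Rightarrow> ('a \<Rightarrow> 'i) \<Rightarrow> 'i set \<Rightarrow> ('i \<Rightarrow> 'a \<Rightarrow> 'a) \<Rightarrow> 'a \<Rightarrow> 'a" where
  "glue A g I P q = (if q \<in> A \<and> g q \<in> I then P (g q) q else q)"

lemma glue_empty: "glue A g {} P = id"
  by (auto simp: glue_def fun_eq_iff)

lemma glue_insert:
  assumes "i \<notin> I" "P i permutes blk A g i" "\<And>j. j \<in> I \<Longrightarrow> P j permutes blk A g j"
  shows "glue A g (insert i I) P = P i \<circ> glue A g I P"
proof
  fix q
  show "glue A g (insert i I) P q = (P i \<circ> glue A g I P) q"
  proof (cases "q \<in> A \<and> g q \<in> insert i I")
    case True
    show ?thesis
    proof (cases "g q = i")
      case True
      with \<open>q \<in> A \<and> _\<close> assms(1) show ?thesis by (simp add: glue_def)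
    next
      case False
      with True have gI: "g q \<in> I" "q \<in> A" by auto
      have "q \<in> blk A g (g q)" using gI by (simp add: blk_def)
      then have "P (g q) q \<in> blk A g (g q)" using assms(3)[OF gI(1)] by (simp add: permutes_in_image)
      then have "P (g q) q \<notin> blk A g i" using False by (auto simp: blk_def)
      then have "P i (P (g q) q) = P (g q) q" using assms(2) by (simp add: permutes_not_in)
      then show ?thesis using gI False by (simp add: glue_def)
    qed
  next
    case False
    then have "q \<notin> blk A g i" by (auto simp: blk_def)
    then have "P i q = q" using assms(2) by (simp add: permutes_not_in)
    then show ?thesis using False by (auto simp: glue_def)
  qed
qed

lemma glue_permutes_sign:
  assumes "finite A" "finite I" "\<And>j. j \<in> I \<Longrightarrow> P j permutes blk A g j"
  shows "glue A g I P permutes A \<and> sign (glue A g I P) = (\<Prod>j\<in>I. sign (P j))"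
  using assms(2,3)
proof (induction I rule: finite_induct)
  case empty
  then show ?case by (simp only: glue_empty permutes_id sign_id prod.empty simp_thms)
next
  case (insert i I)
  have Pi: "P i permutes A" using insert.prems by (rule permutes_subset) (auto simp: blk_def)
  have e: "glue A g (insert i I) P = P i \<circ> glue A g I P"
    using insert by (intro glue_insert) auto
  have ih: "glue A g I P permutes A \<and> sign (glue A g I P) = (\<Prod>j\<in>I. sign (P j))"
    using insert by auto
  have 1: "P i \<circ> glue A g I P permutes A" by (rule permutes_compose[OF ih[THEN conjunct1] Pi])
  have 2: "sign (P i \<circ> glue A g I P) = sign (P i) * sign (glue A g I P)"
    by (rule sign_compose) (use permutes_imp_permutation[OF assms(1)] Pi ih in auto)
  show ?case unfolding e prod.insert[OF insert.hyps(1,2)] by (intro conjI 1) (simp only: 2 ih[THEN conjunct2])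
qed

lemma glue_blk: "q \<in> blk A g j \<Longrightarrow> j \<in> I \<Longrightarrow> glue A g I P q = P j q"
  by (simp add: glue_def blk_def)

lemma glue_g:
  assumes "\<And>j. j \<in> I \<Longrightarrow> P j permutes blk A g j"
  shows "g (glue A g I P q) = g q"
proof (cases "q \<in> A \<and> g q \<in> I")
  case True
  then have "q \<in> blk A g (g q)" by (simp add: blk_def)
  then have "P (g q) q \<in> blk A g (g q)" using assms True by (simp add: permutes_in_image)
  then show ?thesis using True by (simp add: glue_def blk_def)
next
  case False
  then have "glue A g I P q = q" unfolding glue_def by meson
  then show ?thesis by simp
qed

lemma bij_glue:
  assumes "finite A" "finite I" "g ` A \<subseteq> I"
  shows "bij_betw (glue A g I) (PiE I (\<lambda>j. {\<pi>. \<pi> permutes blk A g j})) (blockperm A g)"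
proof (rule bij_betw_imageI)
  show "inj_on (glue A g I) (PiE I (\<lambda>j. {\<pi>. \<pi> permutes blk A g j}))"
  proof (rule inj_onI)
    fix P P' assume P: "P \<in> PiE I (\<lambda>j. {\<pi>. \<pi> permutes blk A g j})"
      and P': "P' \<in> PiE I (\<lambda>j. {\<pi>. \<pi> permutes blk A g j})" and eq: "glue A g I P = glue A g I P'"
    show "P = P'"
    proof (rule PiE_ext[OF P P'])
      fix j assume j: "j \<in> I"
      show "P j = P' j"
      proof
        fix q
        show "P j q = P' j q"
        proof (cases "q \<in> blk A g j")
          case True
          then show ?thesis using eq j glue_blk[OF True j, of P] glue_blk[OF True j, of P'] by metis
        next
          case False
          have "P j permutes blk A g j" "P' j permutes blk A g j" using P P' j by auto
          then show ?thesis using False by (simp add: permutes_not_in)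
        qed
      qed
    qed
  qed
  show "glue A g I ` (PiE I (\<lambda>j. {\<pi>. \<pi> permutes blk A g j})) = blockperm A g"
  proof
    show "glue A g I ` (PiE I (\<lambda>j. {\<pi>. \<pi> permutes blk A g j})) \<subseteq> blockperm A g"
    proof
      fix s assume "s \<in> glue A g I ` (PiE I (\<lambda>j. {\<pi>. \<pi> permutes blk A g j}))"
      then obtain P where P: "P \<in> PiE I (\<lambda>j. {\<pi>. \<pi> permutes blk A g j})" and s: "s = glue A g I P" by auto
      have Pj: "\<And>j. j \<in> I \<Longrightarrow> P j permutes blk A g j" using P by auto
      have gp: "glue A g I P permutes A" using glue_permutes_sign[OF assms(1,2) Pj] by (rule conjunct1)
      have gg: "\<forall>q. g (glue A g I P q) = g q" using glue_g[OF Pj] by blast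
      show "s \<in> blockperm A g" unfolding s blockperm_def using gp gg by simp
    qed
  next
    show "blockperm A g \<subseteq> glue A g I ` (PiE I (\<lambda>j. {\<pi>. \<pi> permutes blk A g j}))"
    proof
      fix s assume s: "s \<in> blockperm A g"
      then have sp: "s permutes A" and sg: "\<And>q. g (s q) = g q" by (auto simp: blockperm_def)
      define P where "P = restrict (\<lambda>j. restrict_id s (blk A g j)) I"
      have Pj: "restrict_id s (blk A g j) permutes blk A g j" for j
      proof (rule permutes_restrict_id)
        have sub: "s ` blk A g j \<subseteq> blk A g j"
        proof
          fix y assume "y \<in> s ` blk A g j"
          then obtain x where x: "x \<in> blk A g j" "y = s x" by blast
          then have "x \<in> A" "g x = j" by (auto simp: blk_def)
          then have "s x \<in> A" "g (s x) = j" using sp sg by (simp_all add: permutes_in_image)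
          then show "y \<in> blk A g j" using x by (simp add: blk_def)
        qed
        have inj: "inj_on s (blk A g j)" by (rule inj_on_subset[OF permutes_inj[OF sp] subset_UNIV])
        have fin: "finite (blk A g j)" using assms(1) by (simp add: blk_def)
        show "bij_betw s (blk A g j) (blk A g j)"
          using endo_inj_surj[OF fin sub inj] inj by (simp add: bij_betw_def)
      qed
      have "P \<in> PiE I (\<lambda>j. {\<pi>. \<pi> permutes blk A g j})" unfolding P_def restrict_PiE_iff using Pj by simp
      moreover have "glue A g I P = s"
      proof
        fix q
        show "glue A g I P q = s q"
        proof (cases "q \<in> A")
          case True
          then have "g q \<in> I" "q \<in> blk A g (g q)" using assms(3) by (auto simp: blk_def)
          then show ?thesis using True by (simp add: glue_def P_def)
        next
          case False
          then show ?thesis using sp by (simp add: glue_def permutes_not_in)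
        qed
      qed
      ultimately show "s \<in> glue A g I ` (PiE I (\<lambda>j. {\<pi>. \<pi> permutes blk A g j}))" by blast
    qed
  qed
qed

lemma finite_blk: "finite A \<Longrightarrow> finite (blk A g j)"
  by (simp add: blk_def)

lemma card_blockperm:
  assumes "finite A" "finite I" "g ` A \<subseteq> I"
  shows "card (blockperm A g) = (\<Prod>j\<in>I. fact (card (blk A g j)))"
proof -
  have "card (blockperm A g) = card (PiE I (\<lambda>j. {\<pi>. \<pi> permutes blk A g j}))"
    using bij_glue[OF assms] by (simp add: bij_betw_same_card)
  also have "\<dots> = (\<Prod>j\<in>I. card {\<pi>. \<pi> permutes blk A g j})" using assms(2) by (simp add: card_PiE)
  also have "\<dots> = (\<Prod>j\<in>I. fact (card (blk A g j)))"
    by (rule prod.cong[OF refl], rule card_permutations[OF refl finite_blk[OF assms(1)]])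
  finally show ?thesis .
qed


lemma UN_blk: "g ` A \<subseteq> I \<Longrightarrow> (\<Union>j\<in>I. blk A g j) = A"
  by (auto simp: blk_def)

lemma prod_blk:
  assumes "finite A" "finite I" "g ` A \<subseteq> I"
  shows "(\<Prod>q\<in>A. h q) = (\<Prod>j\<in>I. \<Prod>q\<in>blk A g j. h q)"
proof -
  have "(\<Prod>q\<in>A. h q) = (\<Prod>q\<in>(\<Union>j\<in>I. blk A g j). h q)" by (simp only: UN_blk[OF assms(3)])
  also have "\<dots> = (\<Prod>j\<in>I. \<Prod>q\<in>blk A g j. h q)"
    by (rule prod.UNION_disjoint[OF assms(2)]) (auto simp: assms(1) blk_def)
  finally show ?thesis .
qed

lemma double_prod_sum_PiE:
  fixes G :: "'i \<Rightarrow> 'x \<Rightarrow> 'x \<Rightarrow> 'b::comm_ring_1"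
  assumes "finite I" "\<And>j. j \<in> I \<Longrightarrow> finite (X j)"
  shows "(\<Prod>j\<in>I. \<Sum>x\<in>X j. \<Sum>y\<in>X j. G j x y) = (\<Sum>P\<in>PiE I X. \<Sum>P'\<in>PiE I X. \<Prod>j\<in>I. G j (P j) (P' j))"
proof -
  have "(\<Prod>j\<in>I. \<Sum>x\<in>X j. \<Sum>y\<in>X j. G j x y) = (\<Sum>P\<in>PiE I X. \<Prod>j\<in>I. \<Sum>y\<in>X j. G j (P j) y)"
    by (rule prod_sum_PiE[OF assms])
  also have "\<dots> = (\<Sum>P\<in>PiE I X. \<Sum>P'\<in>PiE I X. \<Prod>j\<in>I. G j (P j) (P' j))"
    by (rule sum.cong[OF refl], rule prod_sum_PiE[OF assms])
  finally show ?thesis .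
qed

lemma sum_blockperm2:
  fixes \<Phi> :: "'a \<Rightarrow> 'a \<Rightarrow> 'b::comm_ring_1"
  assumes fA: "finite A" and fI: "finite I" and gI: "g ` A \<subseteq> I"
  shows "(\<Sum>p\<in>blockperm A g. \<Sum>p'\<in>blockperm A g. of_int (sign p * sign p') * (\<Prod>q\<in>A. \<Phi> (p q) (p' q)))
       = (\<Prod>j\<in>I. \<Sum>\<pi>\<in>{\<pi>. \<pi> permutes blk A g j}. \<Sum>\<pi>'\<in>{\<pi>. \<pi> permutes blk A g j}.
            of_int (sign \<pi> * sign \<pi>') * (\<Prod>q\<in>blk A g j. \<Phi> (\<pi> q) (\<pi>' q)))"
    (is "?L = (\<Prod>j\<in>I. \<Sum>\<pi>\<in>?X j. \<Sum>\<pi>'\<in>?X j. ?G j \<pi> \<pi>')")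
proof -
  let ?PE = "PiE I ?X"
  let ?F = "\<lambda>p p'. of_int (sign p * sign p') * (\<Prod>q\<in>A. \<Phi> (p q) (p' q)) :: 'b"
  have bij: "bij_betw (glue A g I) ?PE (blockperm A g)" by (rule bij_glue[OF fA fI gI])
  have "?L = (\<Sum>P\<in>?PE. \<Sum>p'\<in>blockperm A g. ?F (glue A g I P) p')"
    by (rule sum.reindex_bij_betw[OF bij, symmetric])
  also have "\<dots> = (\<Sum>P\<in>?PE. \<Sum>P'\<in>?PE. ?F (glue A g I P) (glue A g I P'))"
    by (rule sum.cong[OF refl], rule sum.reindex_bij_betw[OF bij, symmetric])
  also have "\<dots> = (\<Sum>P\<in>?PE. \<Sum>P'\<in>?PE. \<Prod>j\<in>I. ?G j (P j) (P' j))"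
  proof (rule sum.cong[OF refl], rule sum.cong[OF refl])
    fix P P' assume P: "P \<in> ?PE" and P': "P' \<in> ?PE"
    have Pj: "\<And>j. j \<in> I \<Longrightarrow> P j permutes blk A g j" using P by auto
    have P'j: "\<And>j. j \<in> I \<Longrightarrow> P' j permutes blk A g j" using P' by auto
    have s1: "sign (glue A g I P) = (\<Prod>j\<in>I. sign (P j))" using glue_permutes_sign[OF fA fI Pj] by (rule conjunct2)
    have s2: "sign (glue A g I P') = (\<Prod>j\<in>I. sign (P' j))" using glue_permutes_sign[OF fA fI P'j] by (rule conjunct2)
    have pr: "(\<Prod>q\<in>A. \<Phi> (glue A g I P q) (glue A g I P' q)) = (\<Prod>j\<in>I. \<Prod>q\<in>blk A g j. \<Phi> (P j q) (P' j q))"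
    proof -
      have "(\<Prod>q\<in>A. \<Phi> (glue A g I P q) (glue A g I P' q)) = (\<Prod>j\<in>I. \<Prod>q\<in>blk A g j. \<Phi> (glue A g I P q) (glue A g I P' q))"
        by (rule prod_blk[OF fA fI gI])
      also have "\<dots> = (\<Prod>j\<in>I. \<Prod>q\<in>blk A g j. \<Phi> (P j q) (P' j q))"
        by (rule prod.cong[OF refl], rule prod.cong[OF refl]) (simp add: glue_blk)
      finally show ?thesis .
    qed
    show "?F (glue A g I P) (glue A g I P') = (\<Prod>j\<in>I. ?G j (P j) (P' j))"
      unfolding s1 s2 pr by (simp add: prod.distrib of_int_prod)
  qed
  also have "\<dots> = (\<Prod>j\<in>I. \<Sum>\<pi>\<in>?X j. \<Sum>\<pi>'\<in>?X j. ?G j \<pi> \<pi>')"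
    by (rule double_prod_sum_PiE[symmetric, OF fI]) (simp add: finite_permutations finite_blk[OF fA])
  finally show ?thesis .
qed

lemma map_permutation_eq:
  "map_permutation R f \<sigma> = (\<lambda>x. if x \<in> f ` R then f (\<sigma> (inv_into R f x)) else x)"
  by (simp add: map_permutation_def restrict_id_def fun_eq_iff)

lemma transport:
  fixes \<Phi> :: "'a \<Rightarrow> 'a \<Rightarrow> 'b::comm_ring_1" and \<iota> :: "'c \<Rightarrow> 'a"
  assumes inj: "inj_on \<iota> R" and fR: "finite R"
  shows "(\<Sum>\<pi>\<in>{\<pi>. \<pi> permutes \<iota> ` R}. \<Sum>\<pi>'\<in>{\<pi>. \<pi> permutes \<iota> ` R}. of_int (sign \<pi> * sign \<pi>') * (\<Prod>q\<in>\<iota> ` R. \<Phi> (\<pi> q) (\<pi>' q)))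
       = (\<Sum>\<sigma>\<in>{\<sigma>. \<sigma> permutes R}. \<Sum>\<sigma>'\<in>{\<sigma>. \<sigma> permutes R}. of_int (sign \<sigma> * sign \<sigma>') * (\<Prod>i\<in>R. \<Phi> (\<iota> (\<sigma> i)) (\<iota> (\<sigma>' i))))"
proof -
  let ?m = "map_permutation R \<iota>"
  have bb: "bij_betw \<iota> R (\<iota> ` R)" using inj by (simp add: bij_betw_def)
  have bij: "bij_betw ?m {\<sigma>. \<sigma> permutes R} {\<pi>. \<pi> permutes \<iota> ` R}"
    unfolding map_permutation_eq by (rule bij_betw_permutations[OF bb])
  have key: "of_int (sign (?m \<sigma>) * sign (?m \<sigma>')) * (\<Prod>q\<in>\<iota> ` R. \<Phi> (?m \<sigma> q) (?m \<sigma>' q))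
      = of_int (sign \<sigma> * sign \<sigma>') * (\<Prod>i\<in>R. \<Phi> (\<iota> (\<sigma> i)) (\<iota> (\<sigma>' i)))"
    if "\<sigma> permutes R" "\<sigma>' permutes R" for \<sigma> \<sigma>'
  proof -
    have "sign (?m \<sigma>) = sign \<sigma>" "sign (?m \<sigma>') = sign \<sigma>'"
      using sign_map_permutation[OF inj _ fR] that by auto
    moreover have "(\<Prod>q\<in>\<iota> ` R. \<Phi> (?m \<sigma> q) (?m \<sigma>' q)) = (\<Prod>i\<in>R. \<Phi> (?m \<sigma> (\<iota> i)) (?m \<sigma>' (\<iota> i)))"
      using inj by (simp add: prod.reindex)
    moreover have "(\<Prod>i\<in>R. \<Phi> (?m \<sigma> (\<iota> i)) (?m \<sigma>' (\<iota> i))) = (\<Prod>i\<in>R. \<Phi> (\<iota> (\<sigma> i)) (\<iota> (\<sigma>' i)))"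
      by (rule prod.cong[OF refl]) (simp add: map_permutation_apply[OF inj])
    ultimately show ?thesis by simp
  qed
  have "(\<Sum>\<pi>\<in>{\<pi>. \<pi> permutes \<iota> ` R}. \<Sum>\<pi>'\<in>{\<pi>. \<pi> permutes \<iota> ` R}. of_int (sign \<pi> * sign \<pi>') * (\<Prod>q\<in>\<iota> ` R. \<Phi> (\<pi> q) (\<pi>' q)))
      = (\<Sum>\<sigma>\<in>{\<sigma>. \<sigma> permutes R}. \<Sum>\<pi>'\<in>{\<pi>. \<pi> permutes \<iota> ` R}. of_int (sign (?m \<sigma>) * sign \<pi>') * (\<Prod>q\<in>\<iota> ` R. \<Phi> (?m \<sigma> q) (\<pi>' q)))"
    by (rule sum.reindex_bij_betw[OF bij, symmetric])
  also have "\<dots> = (\<Sum>\<sigma>\<in>{\<sigma>. \<sigma> permutes R}. \<Sum>\<sigma>'\<in>{\<sigma>. \<sigma> permutes R}. of_int (sign (?m \<sigma>) * sign (?m \<sigma>')) * (\<Prod>q\<in>\<iota> ` R. \<Phi> (?m \<sigma> q) (?m \<sigma>' q)))"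
    by (rule sum.cong[OF refl], rule sum.reindex_bij_betw[OF bij, symmetric])
  also have "\<dots> = (\<Sum>\<sigma>\<in>{\<sigma>. \<sigma> permutes R}. \<Sum>\<sigma>'\<in>{\<sigma>. \<sigma> permutes R}. of_int (sign \<sigma> * sign \<sigma>') * (\<Prod>i\<in>R. \<Phi> (\<iota> (\<sigma> i)) (\<iota> (\<sigma>' i))))"
  proof (rule sum.cong[OF refl], rule sum.cong[OF refl])
    fix \<sigma> \<sigma>' assume a: "\<sigma> \<in> {\<sigma>. \<sigma> permutes R}" "\<sigma>' \<in> {\<sigma>. \<sigma> permutes R}"
    show "of_int (sign (?m \<sigma>) * sign (?m \<sigma>')) * (\<Prod>q\<in>\<iota> ` R. \<Phi> (?m \<sigma> q) (?m \<sigma>' q))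
      = of_int (sign \<sigma> * sign \<sigma>') * (\<Prod>i\<in>R. \<Phi> (\<iota> (\<sigma> i)) (\<iota> (\<sigma>' i)))"
      by (rule key) (use a in auto)
  qed
  finally show ?thesis .
qed

section \<open>Row groups and the Young coefficient\<close>

lemma row_group_bp: "row_group lam = blockperm {0..<sum_list lam} (row_of lam)"
  by (simp add: row_group_def blockperm_def)

lemma col_group_bp: "col_group lam = blockperm {0..<sum_list lam} (col_of lam)"
  by (simp add: col_group_def blockperm_def)

lemma blk_row:
  assumes "i < length lam"
  shows "blk {0..<sum_list lam} (row_of lam) i = {row_start lam i..<row_start lam (Suc i)}"
proof
  show "blk {0..<sum_list lam} (row_of lam) i \<subseteq> {row_start lam i..<row_start lam (Suc i)}"
    using row_of_props by (fastforce simp: blk_def)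
  show "{row_start lam i..<row_start lam (Suc i)} \<subseteq> blk {0..<sum_list lam} (row_of lam) i"
  proof
    fix q assume q: "q \<in> {row_start lam i..<row_start lam (Suc i)}"
    then have "row_of lam q = i" by (intro row_of_eq) auto
    moreover have "q < sum_list lam" using q rs_le_sum[of lam "Suc i"] by auto
    ultimately show "q \<in> blk {0..<sum_list lam} (row_of lam) i" by (simp add: blk_def)
  qed
qed

lemma card_row_group: "card (row_group lam) = (\<Prod>i<length lam. fact (lam ! i))"
proof -
  have gI: "row_of lam ` {0..<sum_list lam} \<subseteq> {..<length lam}" using row_of_props by auto
  have "card (row_group lam) = (\<Prod>i<length lam. fact (card (blk {0..<sum_list lam} (row_of lam) i)))"
    unfolding row_group_bp by (rule card_blockperm[OF _ _ gI]) auto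
  also have "\<dots> = (\<Prod>i<length lam. fact (lam ! i))"
    by (rule prod.cong[OF refl]) (simp add: blk_row rs_Suc)
  finally show ?thesis .
qed

lemma finite_row_group: "finite (row_group lam)"
  unfolding row_group_def by (rule finite_subset[OF _ finite_permutations[of "{0..<sum_list lam}"]]) auto

lemma young_coef_eq:
  "young_coef lam lab v = (\<Sum>p\<in>col_group lam. if (\<forall>q<sum_list lam. lab (row_of lam (p q)) = v q) then sign p else 0)"
proof -
  let ?X = "\<Sum>p\<in>col_group lam. if (\<forall>q<sum_list lam. lab (row_of lam (p q)) = v q) then sign p else 0"
  have inner: "(\<Sum>p\<in>col_group lam. if (\<forall>q<sum_list lam. lab (row_of lam (s (p q))) = v q) then sign p else 0) = ?X"
    if "s \<in> row_group lam" for s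
  proof -
    have "\<And>q. row_of lam (s q) = row_of lam q" using that by (simp add: row_group_def)
    then show ?thesis by simp
  qed
  have "young_coef lam lab v = (\<Sum>s\<in>row_group lam. ?X) div (\<Prod>i<length lam. fact (lam ! i))"
    unfolding young_coef_def by (simp only: inner cong: sum.cong)
  also have "(\<Sum>s\<in>row_group lam. ?X) = (\<Prod>i<length lam. fact (lam ! i)) * ?X"
    by (simp add: card_row_group of_nat_prod)
  finally show ?thesis by simp
qed




section \<open>Column factorization\<close>

definition Gdet :: "(nat \<Rightarrow> nat \<Rightarrow> int) \<Rightarrow> nat set \<Rightarrow> int" where
  "Gdet \<Psi> R = (\<Sum>\<sigma>\<in>{\<sigma>. \<sigma> permutes R}. \<Sum>\<sigma>'\<in>{\<sigma>. \<sigma> permutes R}.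
      of_int (sign \<sigma> * sign \<sigma>') * (\<Prod>i\<in>R. \<Psi> (\<sigma> i) (\<sigma>' i)))"

lemma Gdet_empty: "Gdet \<Psi> {} = 1"
proof -
  have "{\<sigma>. \<sigma> permutes ({}::nat set)} = {id}" by (auto simp: permutes_empty)
  then show ?thesis by (simp add: Gdet_def)
qed

definition colrows :: "nat list \<Rightarrow> nat \<Rightarrow> nat set" where
  "colrows lam c = {i. i < length lam \<and> c < lam ! i}"

lemma blk_col:
  "blk {0..<sum_list lam} (col_of lam) c = (\<lambda>i. row_start lam i + c) ` colrows lam c"
proof
  show "blk {0..<sum_list lam} (col_of lam) c \<subseteq> (\<lambda>i. row_start lam i + c) ` colrows lam c"
  proof
    fix q assume "q \<in> blk {0..<sum_list lam} (col_of lam) c"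
    then have q: "q < sum_list lam" "col_of lam q = c" by (auto simp: blk_def)
    let ?i = "row_of lam q"
    have "q = row_start lam ?i + c" using q row_of_props(2)[OF q(1)] by (simp add: col_of_def)
    moreover have "?i \<in> colrows lam c" using row_of_props(1)[OF q(1)] col_of_lt[OF q(1)] q(2)
      by (simp add: colrows_def)
    ultimately show "q \<in> (\<lambda>i. row_start lam i + c) ` colrows lam c" by blast
  qed
  show "(\<lambda>i. row_start lam i + c) ` colrows lam c \<subseteq> blk {0..<sum_list lam} (col_of lam) c"
  proof
    fix q assume "q \<in> (\<lambda>i. row_start lam i + c) ` colrows lam c"
    then obtain i where i: "i < length lam" "c < lam ! i" "q = row_start lam i + c" by (auto simp: colrows_def)
    show "q \<in> blk {0..<sum_list lam} (col_of lam) c"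
      using pos_props[OF i(1,2)] i(3) by (simp add: blk_def)
  qed
qed

lemma inj_col: "inj_on (\<lambda>i. row_start lam i + c) (colrows lam c)"
proof (rule inj_onI)
  fix i j assume a: "i \<in> colrows lam c" "j \<in> colrows lam c" and e: "row_start lam i + c = row_start lam j + c"
  from a have i: "i < length lam" "c < lam ! i" and j: "j < length lam" "c < lam ! j" by (simp_all add: colrows_def)
  have "i = row_of lam (row_start lam i + c)" using pos_props(1)[OF i] by simp
  also have "\<dots> = row_of lam (row_start lam j + c)" using e by simp
  also have "\<dots> = j" using pos_props(1)[OF j] by simp
  finally show "i = j" .
qed

lemma finite_colrows: "finite (colrows lam c)"
  by (simp add: colrows_def)

lemma col_factor:
  "(\<Sum>p\<in>col_group lam. \<Sum>p'\<in>col_group lam. of_int (sign p * sign p') *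
       (\<Prod>q\<in>{0..<sum_list lam}. \<Psi> (row_of lam (p q)) (row_of lam (p' q))))
   = (\<Prod>c<sum_list lam. Gdet \<Psi> (colrows lam c))"
proof -
  let ?A = "{0..<sum_list lam}"
  have gI: "col_of lam ` ?A \<subseteq> {..<sum_list lam}"
  proof
    fix c assume "c \<in> col_of lam ` ?A"
    then obtain q where "q < sum_list lam" "c = col_of lam q" by auto
    then show "c \<in> {..<sum_list lam}" using col_of_le[of lam q] by simp
  qed
  have "(\<Sum>p\<in>col_group lam. \<Sum>p'\<in>col_group lam. of_int (sign p * sign p') *
       (\<Prod>q\<in>?A. \<Psi> (row_of lam (p q)) (row_of lam (p' q))))
     = (\<Prod>c<sum_list lam. \<Sum>\<pi>\<in>{\<pi>. \<pi> permutes blk ?A (col_of lam) c}. \<Sum>\<pi>'\<in>{\<pi>. \<pi> permutes blk ?A (col_of lam) c}.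
            of_int (sign \<pi> * sign \<pi>') * (\<Prod>q\<in>blk ?A (col_of lam) c. \<Psi> (row_of lam (\<pi> q)) (row_of lam (\<pi>' q))))"
    unfolding col_group_bp by (rule sum_blockperm2[OF _ _ gI]) auto
  also have "\<dots> = (\<Prod>c<sum_list lam. Gdet \<Psi> (colrows lam c))"
  proof (rule prod.cong[OF refl])
    fix c
    let ?\<iota> = "\<lambda>i. row_start lam i + c"
    have "(\<Sum>\<pi>\<in>{\<pi>. \<pi> permutes blk ?A (col_of lam) c}. \<Sum>\<pi>'\<in>{\<pi>. \<pi> permutes blk ?A (col_of lam) c}.
            of_int (sign \<pi> * sign \<pi>') * (\<Prod>q\<in>blk ?A (col_of lam) c. \<Psi> (row_of lam (\<pi> q)) (row_of lam (\<pi>' q))))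
        = (\<Sum>\<sigma>\<in>{\<sigma>. \<sigma> permutes colrows lam c}. \<Sum>\<sigma>'\<in>{\<sigma>. \<sigma> permutes colrows lam c}.
            of_int (sign \<sigma> * sign \<sigma>') * (\<Prod>i\<in>colrows lam c. \<Psi> (row_of lam (?\<iota> (\<sigma> i))) (row_of lam (?\<iota> (\<sigma>' i)))))"
      unfolding blk_col by (rule transport[OF inj_col finite_colrows])
    also have "\<dots> = Gdet \<Psi> (colrows lam c)"
      unfolding Gdet_def
    proof (rule sum.cong[OF refl], rule sum.cong[OF refl])
      fix \<sigma> \<sigma>' assume a: "\<sigma> \<in> {\<sigma>. \<sigma> permutes colrows lam c}" "\<sigma>' \<in> {\<sigma>. \<sigma> permutes colrows lam c}"
      have r: "row_of lam (?\<iota> (\<tau> i)) = \<tau> i" if "\<tau> permutes colrows lam c" "i \<in> colrows lam c" for \<tau> i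
      proof -
        have "\<tau> i \<in> colrows lam c" using that by (simp add: permutes_in_image)
        then have "\<tau> i < length lam" "c < lam ! \<tau> i" by (simp_all add: colrows_def)
        then show ?thesis by (rule pos_props(1))
      qed
      show "of_int (sign \<sigma> * sign \<sigma>') * (\<Prod>i\<in>colrows lam c. \<Psi> (row_of lam (?\<iota> (\<sigma> i))) (row_of lam (?\<iota> (\<sigma>' i))))
          = of_int (sign \<sigma> * sign \<sigma>') * (\<Prod>i\<in>colrows lam c. \<Psi> (\<sigma> i) (\<sigma>' i))"
      proof -
        have "(\<Prod>i\<in>colrows lam c. \<Psi> (row_of lam (?\<iota> (\<sigma> i))) (row_of lam (?\<iota> (\<sigma>' i))))
          = (\<Prod>i\<in>colrows lam c. \<Psi> (\<sigma> i) (\<sigma>' i))"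
        proof (rule prod.cong[OF refl])
          fix i assume "i \<in> colrows lam c"
          then show "\<Psi> (row_of lam (?\<iota> (\<sigma> i))) (row_of lam (?\<iota> (\<sigma>' i))) = \<Psi> (\<sigma> i) (\<sigma>' i)"
            using r[of \<sigma> i] r[of \<sigma>' i] a by simp
        qed
        then show ?thesis by simp
      qed
    qed
    finally show "(\<Sum>\<pi>\<in>{\<pi>. \<pi> permutes blk ?A (col_of lam) c}. \<Sum>\<pi>'\<in>{\<pi>. \<pi> permutes blk ?A (col_of lam) c}.
            of_int (sign \<pi> * sign \<pi>') * (\<Prod>q\<in>blk ?A (col_of lam) c. \<Psi> (row_of lam (\<pi> q)) (row_of lam (\<pi>' q))))
        = Gdet \<Psi> (colrows lam c)" .
  qed
  finally show ?thesis .
qed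

lemma rs_take:
  assumes "take m lam1 = take m lam2" "i \<le> m"
  shows "row_start lam1 i = row_start lam2 i"
proof -
  have "take i lam1 = take i lam2" using assms by (metis min.absorb1 take_take)
  then show ?thesis by (simp add: row_start_def)
qed

lemma rows_agree:
  assumes tk: "take m lam1 = take m lam2" and s1: "row_start lam1 m = sum_list lam1"
    and s2: "sum_list lam1 = sum_list lam2" and q: "q < sum_list lam1"
  shows "row_of lam2 q = row_of lam1 q" "col_of lam2 q = col_of lam1 q"
proof -
  let ?i = "row_of lam1 q"
  have p: "row_start lam1 ?i \<le> q" "q < row_start lam1 (Suc ?i)" using row_of_props[OF q] by auto
  have "?i < m"
  proof (rule ccontr)
    assume "\<not> ?i < m"
    then have "row_start lam1 m \<le> row_start lam1 ?i" by (intro rs_mono) auto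
    then show False using p q s1 by simp
  qed
  then have e1: "row_start lam2 ?i = row_start lam1 ?i" "row_start lam2 (Suc ?i) = row_start lam1 (Suc ?i)"
    using rs_take[OF tk] by auto
  show r: "row_of lam2 q = row_of lam1 q" by (rule row_of_eq) (use p e1 in auto)
  show "col_of lam2 q = col_of lam1 q" by (simp add: col_of_def r e1)
qed

lemma col_group_agree:
  assumes tk: "take m lam1 = take m lam2" and s1: "row_start lam1 m = sum_list lam1"
    and s2: "sum_list lam1 = sum_list lam2"
  shows "col_group lam2 = col_group lam1"
proof -
  have "(\<forall>q. col_of lam2 (s q) = col_of lam2 q) \<longleftrightarrow> (\<forall>q. col_of lam1 (s q) = col_of lam1 q)"
    if sp: "s permutes {0..<sum_list lam1}" for s
  proof -
    have "col_of lam2 (s q) = col_of lam2 q \<longleftrightarrow> col_of lam1 (s q) = col_of lam1 q" for q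
    proof (cases "q < sum_list lam1")
      case True
      then have "s q < sum_list lam1" using sp permutes_in_image[OF sp, of q] by auto
      then show ?thesis using rows_agree[OF tk s1 s2] True by simp
    next
      case False
      then have "s q = q" using sp by (simp add: permutes_not_in)
      then show ?thesis by simp
    qed
    then show ?thesis by blast
  qed
  then show ?thesis unfolding col_group_def s2[symmetric] by (intro Collect_cong) blast
qed




context
  fixes r n :: nat and a :: "nat \<Rightarrow> nat" and k :: "nat \<Rightarrow> nat \<Rightarrow> int"
  assumes sw: "symmetric_weight r n a k" and an: "\<forall>t<r. a t \<le> n"
begin

lemma k_nonneg: "t < r \<Longrightarrow> 1 \<le> i \<Longrightarrow> i \<le> n \<Longrightarrow> k t i \<ge> 0"
  using sw by (simp add: symmetric_weight_def sum_symmetric_def pos_dominant_def)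

lemma k_dec: "t < r \<Longrightarrow> 1 \<le> i \<Longrightarrow> i < n \<Longrightarrow> i \<noteq> a t \<Longrightarrow> k t (i+1) \<le> k t i"
  using sw by (simp add: symmetric_weight_def sum_symmetric_def pos_dominant_def)

lemma k_sum: "t < r \<Longrightarrow> (\<Sum>i=1..a t. k t i) = (\<Sum>i=a t + 1..n. k t i)"
  using sw by (simp add: symmetric_weight_def sum_symmetric_def)

lemma k_sym: "t < r \<Longrightarrow> 1 \<le> i \<Longrightarrow> i \<le> min (a t) (n - a t) \<Longrightarrow> k t i = k t (a t + i)"
  using sw by (simp add: symmetric_weight_def)

end

lemma int_sum_list_nat: "(\<And>x. x \<in> set xs \<Longrightarrow> f x \<ge> 0) \<Longrightarrow> int (sum_list (map (\<lambda>x. nat (f x)) xs)) = sum_list (map f xs)"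
  by (induction xs) auto

lemma sum_list_upt_Icc: "sum_list (map f [m..<Suc n]) = (\<Sum>i=m..n. f i)"
  by (simp del: upt_Suc add: interv_sum_list_conv_sum_set_nat atLeastLessThanSuc_atLeastAtMost)

lemma length_lp [simp]: "length (lam_plus a k t) = a t"
  by (simp del: upt_Suc add: lam_plus_def)

lemma length_lm [simp]: "length (lam_minus n a k t) = n - a t"
  by (simp del: upt_Suc add: lam_minus_def)

lemma nth_lp: "i < a t \<Longrightarrow> lam_plus a k t ! i = nat (k t (i + 1))"
  by (simp del: upt_Suc add: lam_plus_def)

lemma nth_lm: "i < n - a t \<Longrightarrow> lam_minus n a k t ! i = nat (k t (a t + 1 + i))"
  by (simp del: upt_Suc add: lam_minus_def)

context
  fixes r n :: nat and a :: "nat \<Rightarrow> nat" and k :: "nat \<Rightarrow> nat \<Rightarrow> int"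
  assumes sw: "symmetric_weight r n a k" and an: "\<forall>t<r. a t \<le> n"
begin

lemma sum_lp: "t < r \<Longrightarrow> sum_list (lam_plus a k t) = depth_tau a k t"
proof -
  assume t: "t < r"
  have "int (sum_list (lam_plus a k t)) = sum_list (map (k t) [1..<a t + 1])"
    unfolding lam_plus_def
    by (rule int_sum_list_nat) (use k_nonneg[OF sw an t] an t in auto)
  also have "\<dots> = (\<Sum>i=1..a t. k t i)" using sum_list_upt_Icc[of "k t" 1 "a t"] by simp
  finally have "int (sum_list (lam_plus a k t)) = (\<Sum>i=1..a t. k t i)" .
  then show ?thesis by (simp add: depth_tau_def)
qed

lemma sum_lm: "t < r \<Longrightarrow> sum_list (lam_minus n a k t) = depth_tau a k t"
proof -
  assume t: "t < r"
  have "int (sum_list (lam_minus n a k t)) = sum_list (map (k t) [a t + 1..<n + 1])"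
    unfolding lam_minus_def
    by (rule int_sum_list_nat) (use k_nonneg[OF sw an t] an t in auto)
  also have "\<dots> = (\<Sum>i=a t + 1..n. k t i)" using sum_list_upt_Icc[of "k t" "a t + 1" n] by simp
  also have "\<dots> = (\<Sum>i=1..a t. k t i)" using k_sum[OF sw an t] by simp
  finally have "int (sum_list (lam_minus n a k t)) = (\<Sum>i=1..a t. k t i)" .
  then show ?thesis by (simp add: depth_tau_def)
qed

lemma take_agree:
  assumes t: "t < r"
  shows "take (min (a t) (n - a t)) (lam_plus a k t) = take (min (a t) (n - a t)) (lam_minus n a k t)"
proof (rule nth_equalityI)
  show "length (take (min (a t) (n - a t)) (lam_plus a k t)) = length (take (min (a t) (n - a t)) (lam_minus n a k t))"
    by simp
  fix i assume "i < length (take (min (a t) (n - a t)) (lam_plus a k t))"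
  then have i: "i < a t" "i < n - a t" by auto
  have "k t (i + 1) = k t (a t + (i + 1))" by (rule k_sym[OF sw an t]) (use i in auto)
  then show "take (min (a t) (n - a t)) (lam_plus a k t) ! i = take (min (a t) (n - a t)) (lam_minus n a k t) ! i"
    using i by (simp add: nth_lp nth_lm)
qed

lemma lm_lp_agree:
  assumes t: "t < r"
  shows "col_group (lam_minus n a k t) = col_group (lam_plus a k t)"
    "\<And>q. q < depth_tau a k t \<Longrightarrow> row_of (lam_minus n a k t) q = row_of (lam_plus a k t) q"
proof -
  let ?m = "min (a t) (n - a t)"
  have tk: "take ?m (lam_plus a k t) = take ?m (lam_minus n a k t)" by (rule take_agree[OF t])
  have ss: "sum_list (lam_plus a k t) = sum_list (lam_minus n a k t)" using sum_lp[OF t] sum_lm[OF t] by simp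
  have "col_group (lam_minus n a k t) = col_group (lam_plus a k t) \<and>
        (\<forall>q < depth_tau a k t. row_of (lam_minus n a k t) q = row_of (lam_plus a k t) q)"
  proof (cases "a t \<le> n - a t")
    case True
    then have m: "?m = length (lam_plus a k t)" by simp
    have s1: "row_start (lam_plus a k t) ?m = sum_list (lam_plus a k t)" by (simp only: m rs_ge order.refl)
    show ?thesis using col_group_agree[OF tk s1 ss] rows_agree(1)[OF tk s1 ss] sum_lp[OF t] by simp
  next
    case False
    then have m: "?m = length (lam_minus n a k t)" by simp
    have s1: "row_start (lam_minus n a k t) ?m = sum_list (lam_minus n a k t)" by (simp only: m rs_ge order.refl)
    show ?thesis using col_group_agree[OF tk[symmetric] s1 ss[symmetric]] rows_agree(1)[OF tk[symmetric] s1 ss[symmetric]] sum_lm[OF t]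
      by simp
  qed
  then show "col_group (lam_minus n a k t) = col_group (lam_plus a k t)"
    "\<And>q. q < depth_tau a k t \<Longrightarrow> row_of (lam_minus n a k t) q = row_of (lam_plus a k t) q" by auto
qed

end


section \<open>Blocks of slots\<close>

definition DL :: "nat \<Rightarrow> (nat \<Rightarrow> nat) \<Rightarrow> (nat \<Rightarrow> nat \<Rightarrow> int) \<Rightarrow> nat list" where
  "DL r a k = map (depth_tau a k) [0..<r]"

definition bt :: "nat \<Rightarrow> (nat \<Rightarrow> nat) \<Rightarrow> (nat \<Rightarrow> nat \<Rightarrow> int) \<Rightarrow> nat \<Rightarrow> nat" where
  "bt r a k s = row_of (DL r a k) s"

lemma offset_0 [simp]: "offset a k 0 = 0"
  by (simp add: offset_def)

lemma off_Suc: "offset a k (Suc t) = offset a k t + depth_tau a k t"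
  by (simp add: offset_def)

lemma depth_offset: "depth r a k = offset a k r"
  by (simp add: depth_def offset_def)

lemma rs_DL: "t \<le> r \<Longrightarrow> row_start (DL r a k) t = offset a k t"
proof -
  assume t: "t \<le> r"
  have "take t (DL r a k) = map (depth_tau a k) [0..<t]" using t by (simp add: DL_def take_map)
  then have "row_start (DL r a k) t = sum_list (map (depth_tau a k) [0..<t])" by (simp add: row_start_def)
  also have "\<dots> = offset a k t" by (simp add: interv_sum_list_conv_sum_set_nat offset_def atLeast0LessThan)
  finally show ?thesis .
qed

lemma sum_DL: "sum_list (DL r a k) = depth r a k"
  using rs_DL[of r r a k] rs_ge[of "DL r a k" r] by (simp add: DL_def depth_offset)

lemma bt_props:
  assumes "s < depth r a k"
  shows "bt r a k s < r" "offset a k (bt r a k s) \<le> s" "s < offset a k (bt r a k s) + depth_tau a k (bt r a k s)"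
proof -
  have s: "s < sum_list (DL r a k)" using assms by (simp add: sum_DL)
  note p = row_of_props[OF s]
  show t: "bt r a k s < r" using p(1) by (simp add: bt_def DL_def)
  show "offset a k (bt r a k s) \<le> s" using p(2) rs_DL[of "bt r a k s" r a k] t by (simp add: bt_def)
  show "s < offset a k (bt r a k s) + depth_tau a k (bt r a k s)"
    using p(3) rs_DL[of "Suc (bt r a k s)" r a k] t by (simp add: bt_def off_Suc)
qed

lemma bt_eq:
  assumes "t < r" "q < depth_tau a k t"
  shows "bt r a k (offset a k t + q) = t"
  unfolding bt_def
  by (rule row_of_eq) (use assms rs_DL[of t r a k] rs_DL[of "Suc t" r a k] in \<open>auto simp: off_Suc\<close>)

lemma offset_mono: "t \<le> t' \<Longrightarrow> offset a k t \<le> offset a k t'"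
  unfolding offset_def by (rule sum_mono2) auto

lemma off_le:
  assumes "t < r"
  shows "offset a k t + depth_tau a k t \<le> depth r a k"
  using offset_mono[of "Suc t" r a k] assms by (simp add: off_Suc depth_offset)

lemma prod_lessThan_add: "(\<Prod>s<m1 + (m2::nat). F s) = (\<Prod>s<m1. F s) * (\<Prod>q<m2. F (m1 + q))"
  by (induction m2) (auto simp: algebra_simps)

lemma prod_blocks: "(\<Prod>s<offset a k R. F s) = (\<Prod>t<R. \<Prod>q<depth_tau a k t. F (offset a k t + q))"
  by (induction R) (auto simp: off_Suc prod_lessThan_add)

lemma finite_col_group: "finite (col_group lam)"
  unfolding col_group_def by (rule finite_subset[OF _ finite_permutations[of "{0..<sum_list lam}"]]) auto

lemma finite_Evee: "finite (Evee r n a)"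
  by (rule finite_subset[of _ "{..<r} \<times> {..n} \<times> {..n}"]) (auto simp: Evee_def)

lemma prod_if_zero:
  fixes w :: "'i \<Rightarrow> 'b::comm_semiring_1"
  assumes "finite A"
  shows "(\<Prod>t\<in>A. if B t then w t else 0) = (if \<forall>t\<in>A. B t then \<Prod>t\<in>A. w t else 0)"
  using assms by (induction A rule: finite_induct) auto

section \<open>Expansion of the coefficients\<close>

definition Fam :: "nat \<Rightarrow> nat \<Rightarrow> (nat \<Rightarrow> nat) \<Rightarrow> (nat \<Rightarrow> nat \<Rightarrow> int) \<Rightarrow> (nat \<Rightarrow> (nat \<Rightarrow> nat) \<times> (nat \<Rightarrow> nat)) set" where
  "Fam r n a k = PiE {..<r} (\<lambda>t. col_group (lam_plus a k t) \<times> col_group (lam_minus n a k t))"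

definition LP :: "nat \<Rightarrow> nat \<Rightarrow> (nat \<Rightarrow> nat) \<Rightarrow> (nat \<Rightarrow> nat \<Rightarrow> int) \<Rightarrow> (nat \<Rightarrow> (nat \<Rightarrow> nat) \<times> (nat \<Rightarrow> nat)) \<Rightarrow> nat \<Rightarrow> var" where
  "LP r n a k P = (\<lambda>s. if s < depth r a k then
      (bt r a k s,
       row_of (lam_plus a k (bt r a k s)) (fst (P (bt r a k s)) (s - offset a k (bt r a k s))) + 1,
       a (bt r a k s) + 1 + row_of (lam_minus n a k (bt r a k s)) (snd (P (bt r a k s)) (s - offset a k (bt r a k s))))
     else undefined)"

definition WP :: "nat \<Rightarrow> (nat \<Rightarrow> (nat \<Rightarrow> nat) \<times> (nat \<Rightarrow> nat)) \<Rightarrow> int" where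
  "WP r P = (\<Prod>t<r. sign (fst (P t)) * sign (snd (P t)))"

definition Pk :: "nat \<Rightarrow> nat \<Rightarrow> (nat \<Rightarrow> nat) \<Rightarrow> (nat \<Rightarrow> nat \<Rightarrow> int) \<Rightarrow> (var \<Rightarrow> nat) \<Rightarrow> int" where
  "Pk r n a k x = (\<Sum>l\<in>({0..<depth r a k} \<rightarrow>\<^sub>E Evee r n a). a_coef r n a k l * (\<Prod>s<depth r a k. int (x (l s))))"

definition Psi :: "(nat \<Rightarrow> nat) \<Rightarrow> (var \<Rightarrow> nat) \<Rightarrow> nat \<Rightarrow> nat \<Rightarrow> nat \<Rightarrow> int" where
  "Psi a x t = (\<lambda>i j. int (x (t, i + 1, a t + 1 + j)))"

lemma LP_off:
  assumes "t < r" "q < depth_tau a k t"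
  shows "LP r n a k P (offset a k t + q) = (t, row_of (lam_plus a k t) (fst (P t) q) + 1, a t + 1 + row_of (lam_minus n a k t) (snd (P t) q))"
proof -
  have "offset a k t + q < depth r a k" using off_le[of t r a k, OF assms(1)] assms(2) by simp
  then show ?thesis using bt_eq[OF assms] by (simp add: LP_def)
qed

context
  fixes r n :: nat and a :: "nat \<Rightarrow> nat" and k :: "nat \<Rightarrow> nat \<Rightarrow> int"
  assumes sw: "symmetric_weight r n a k" and an: "\<forall>t<r. a t \<le> n"
begin

lemma perm_lt:
  assumes "t < r" "p \<in> col_group (lam_plus a k t)" "q < depth_tau a k t"
  shows "p q < depth_tau a k t"
proof -
  have pp: "p permutes {0..<depth_tau a k t}" using assms(2) sum_lp[OF sw an assms(1)] by (simp add: col_group_def)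
  then show ?thesis using permutes_in_image[OF pp, of q] assms(3) by simp
qed

lemma perm_lt':
  assumes "t < r" "p \<in> col_group (lam_minus n a k t)" "q < depth_tau a k t"
  shows "p q < depth_tau a k t"
proof -
  have pp: "p permutes {0..<depth_tau a k t}" using assms(2) sum_lm[OF sw an assms(1)] by (simp add: col_group_def)
  then show ?thesis using permutes_in_image[OF pp, of q] assms(3) by simp
qed

lemma LP_in:
  assumes P: "P \<in> Fam r n a k"
  shows "LP r n a k P \<in> ({0..<depth r a k} \<rightarrow>\<^sub>E Evee r n a)"
proof -
  have "LP r n a k P s \<in> Evee r n a" if s: "s < depth r a k" for s
  proof -
    let ?t = "bt r a k s"
    let ?q = "s - offset a k ?t"
    note b = bt_props[OF s]
    have q: "?q < depth_tau a k ?t" using b by simp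
    have "P ?t \<in> col_group (lam_plus a k ?t) \<times> col_group (lam_minus n a k ?t)"
      using P b(1) unfolding Fam_def by (intro PiE_mem[of P "{..<r}"]) auto
    then have Pt: "fst (P ?t) \<in> col_group (lam_plus a k ?t)" "snd (P ?t) \<in> col_group (lam_minus n a k ?t)"
      by (simp_all add: mem_Times_iff)
    have 1: "fst (P ?t) ?q < sum_list (lam_plus a k ?t)" using perm_lt[OF b(1) Pt(1) q] sum_lp[OF sw an b(1)] by simp
    have 2: "snd (P ?t) ?q < sum_list (lam_minus n a k ?t)" using perm_lt'[OF b(1) Pt(2) q] sum_lm[OF sw an b(1)] by simp
    have "row_of (lam_plus a k ?t) (fst (P ?t) ?q) < a ?t" using row_of_props(1)[OF 1] by simp
    moreover have "row_of (lam_minus n a k ?t) (snd (P ?t) ?q) < n - a ?t" using row_of_props(1)[OF 2] by simp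
    moreover have "a ?t \<le> n" using an b(1) by simp
    ultimately show ?thesis using s b(1) unfolding LP_def Evee_def by simp
  qed
  moreover have "LP r n a k P s = undefined" if "s \<notin> {0..<depth r a k}" for s
    using that by (simp add: LP_def)
  ultimately show ?thesis by (intro PiE_I) auto
qed

lemma match_iff:
  assumes l: "l \<in> ({0..<depth r a k} \<rightarrow>\<^sub>E Evee r n a)" and P: "P \<in> Fam r n a k"
  shows "((\<forall>t<r. \<forall>q<depth_tau a k t. fst (l (offset a k t + q)) = t) \<and>
          (\<forall>t<r. (\<forall>q<depth_tau a k t. row_of (lam_plus a k t) (fst (P t) q) + 1 = fst (snd (l (offset a k t + q)))) \<and>
                 (\<forall>q<depth_tau a k t. a t + 1 + row_of (lam_minus n a k t) (snd (P t) q) = snd (snd (l (offset a k t + q))))))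
         \<longleftrightarrow> l = LP r n a k P" (is "?A \<longleftrightarrow> _")
proof
  assume "l = LP r n a k P"
  then show ?A by (simp add: LP_off)
next
  assume A: ?A
  have LPin: "LP r n a k P \<in> ({0..<depth r a k} \<rightarrow>\<^sub>E Evee r n a)" by (rule LP_in[OF P])
  show "l = LP r n a k P"
  proof (rule PiE_ext[OF l LPin])
    fix s assume "s \<in> {0..<depth r a k}"
    then have s: "s < depth r a k" by simp
    let ?t = "bt r a k s"
    let ?q = "s - offset a k ?t"
    note b = bt_props[OF s]
    have q: "?q < depth_tau a k ?t" and sq: "s = offset a k ?t + ?q" using b by auto
    from A have A1: "\<forall>t<r. \<forall>q<depth_tau a k t. fst (l (offset a k t + q)) = t"
      and A2: "\<forall>t<r. \<forall>q<depth_tau a k t. row_of (lam_plus a k t) (fst (P t) q) + 1 = fst (snd (l (offset a k t + q)))"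
      and A3: "\<forall>t<r. \<forall>q<depth_tau a k t. a t + 1 + row_of (lam_minus n a k t) (snd (P t) q) = snd (snd (l (offset a k t + q)))"
      by blast+
    have "fst (l s) = ?t" using A1[rule_format, OF b(1) q] sq by simp
    moreover have "fst (snd (l s)) = row_of (lam_plus a k ?t) (fst (P ?t) ?q) + 1" using A2[rule_format, OF b(1) q] sq by simp
    moreover have "snd (snd (l s)) = a ?t + 1 + row_of (lam_minus n a k ?t) (snd (P ?t) ?q)" using A3[rule_format, OF b(1) q] sq by simp
    ultimately have "l s = (?t, row_of (lam_plus a k ?t) (fst (P ?t) ?q) + 1, a ?t + 1 + row_of (lam_minus n a k ?t) (snd (P ?t) ?q))"
      by (metis prod.collapse)
    then show "l s = LP r n a k P s" using LP_off[OF b(1) q] sq by metis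
  qed
qed


lemma a_coef_expand:
  assumes l: "l \<in> ({0..<depth r a k} \<rightarrow>\<^sub>E Evee r n a)"
  shows "a_coef r n a k l = (\<Sum>P\<in>Fam r n a k. if l = LP r n a k P then WP r P else 0)"
proof -
  let ?Mp = "\<lambda>t p. \<forall>q<depth_tau a k t. row_of (lam_plus a k t) (p q) + 1 = fst (snd (l (offset a k t + q)))"
  let ?Mm = "\<lambda>t p'. \<forall>q<depth_tau a k t. a t + 1 + row_of (lam_minus n a k t) (p' q) = snd (snd (l (offset a k t + q)))"
  let ?cond = "\<forall>t<r. \<forall>q<depth_tau a k t. fst (l (offset a k t + q)) = t"
  let ?Q = "\<lambda>t. col_group (lam_plus a k t) \<times> col_group (lam_minus n a k t)"
  let ?H = "\<lambda>t pp. if ?Mp t (fst pp) \<and> ?Mm t (snd pp) then sign (fst pp) * sign (snd pp) else 0"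
  have Yp: "young_coef (lam_plus a k t) (\<lambda>i. i + 1) (\<lambda>q. fst (snd (l (offset a k t + q))))
      = (\<Sum>p\<in>col_group (lam_plus a k t). if ?Mp t p then sign p else 0)" if t: "t < r" for t
    unfolding young_coef_eq sum_lp[OF sw an t] by simp
  have Ym: "young_coef (lam_minus n a k t) (\<lambda>i. a t + 1 + i) (\<lambda>q. snd (snd (l (offset a k t + q))))
      = (\<Sum>p\<in>col_group (lam_minus n a k t). if ?Mm t p then sign p else 0)" if t: "t < r" for t
    unfolding young_coef_eq sum_lm[OF sw an t] by simp
  have YY: "young_coef (lam_plus a k t) (\<lambda>i. i + 1) (\<lambda>q. fst (snd (l (offset a k t + q)))) *
            young_coef (lam_minus n a k t) (\<lambda>i. a t + 1 + i) (\<lambda>q. snd (snd (l (offset a k t + q))))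
      = (\<Sum>pp\<in>?Q t. ?H t pp)" if t: "t < r" for t
  proof -
    have "(\<Sum>p\<in>col_group (lam_plus a k t). if ?Mp t p then sign p else 0) *
          (\<Sum>p\<in>col_group (lam_minus n a k t). if ?Mm t p then sign p else 0)
        = (\<Sum>p\<in>col_group (lam_plus a k t). \<Sum>p'\<in>col_group (lam_minus n a k t).
             (if ?Mp t p then sign p else 0) * (if ?Mm t p' then sign p' else 0))"
      by (rule sum_product)
    also have "\<dots> = (\<Sum>p\<in>col_group (lam_plus a k t). \<Sum>p'\<in>col_group (lam_minus n a k t). ?H t (p, p'))"
      by (intro sum.cong refl) simp
    also have "\<dots> = (\<Sum>pp\<in>?Q t. ?H t pp)"
      by (rule sum.cartesian_product[of "\<lambda>p p'. ?H t (p, p')", simplified case_prod_beta' prod.collapse])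
    finally show ?thesis using Yp[OF t] Ym[OF t] by simp
  qed
  have prodH: "(\<Prod>t<r. \<Sum>pp\<in>?Q t. ?H t pp) = (\<Sum>P\<in>Fam r n a k. \<Prod>t<r. ?H t (P t))"
    unfolding Fam_def by (rule prod_sum_PiE) (auto intro: finite_col_group)
  have prodH2: "(\<Prod>t<r. ?H t (P t)) = (if \<forall>t<r. ?Mp t (fst (P t)) \<and> ?Mm t (snd (P t)) then WP r P else 0)" for P
    unfolding WP_def by (subst prod_if_zero) auto
  have PP: "(\<Prod>t<r. young_coef (lam_plus a k t) (\<lambda>i. i + 1) (\<lambda>q. fst (snd (l (offset a k t + q)))) *
            young_coef (lam_minus n a k t) (\<lambda>i. a t + 1 + i) (\<lambda>q. snd (snd (l (offset a k t + q)))))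
      = (\<Prod>t<r. \<Sum>pp\<in>?Q t. ?H t pp)"
    by (rule prod.cong[OF refl], rule YY) simp
  have "a_coef r n a k l = (if ?cond then (\<Prod>t<r. \<Sum>pp\<in>?Q t. ?H t pp) else 0)"
    unfolding a_coef_def PP ..
  also have "\<dots> = (\<Sum>P\<in>Fam r n a k. if ?cond \<and> (\<forall>t<r. ?Mp t (fst (P t)) \<and> ?Mm t (snd (P t))) then WP r P else 0)"
  proof (cases ?cond)
    case True
    then show ?thesis unfolding prodH prodH2 by simp
  next
    case False
    then have F: "?cond = False" by blast
    show ?thesis unfolding F by simp
  qed
  also have "\<dots> = (\<Sum>P\<in>Fam r n a k. if l = LP r n a k P then WP r P else 0)"
  proof (rule sum.cong[OF refl])
    fix P assume P: "P \<in> Fam r n a k"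
    show "(if ?cond \<and> (\<forall>t<r. ?Mp t (fst (P t)) \<and> ?Mm t (snd (P t))) then WP r P else 0)
        = (if l = LP r n a k P then WP r P else 0)"
      using match_iff[OF l P] by simp
  qed
  finally show ?thesis .
qed

lemma finite_Fam: "finite (Fam r n a k)"
  unfolding Fam_def by (rule finite_PiE) (auto intro: finite_col_group)

lemma Pk_expand: "Pk r n a k x = (\<Sum>P\<in>Fam r n a k. WP r P * (\<Prod>s<depth r a k. int (x (LP r n a k P s))))"
proof -
  let ?L = "{0..<depth r a k} \<rightarrow>\<^sub>E Evee r n a"
  have finL: "finite ?L" by (rule finite_PiE) (auto intro: finite_Evee)
  have "Pk r n a k x = (\<Sum>l\<in>?L. \<Sum>P\<in>Fam r n a k. if l = LP r n a k P then WP r P * (\<Prod>s<depth r a k. int (x (l s))) else 0)"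
    unfolding Pk_def
  proof (rule sum.cong[OF refl])
    fix l assume l: "l \<in> ?L"
    show "a_coef r n a k l * (\<Prod>s<depth r a k. int (x (l s))) =
        (\<Sum>P\<in>Fam r n a k. if l = LP r n a k P then WP r P * (\<Prod>s<depth r a k. int (x (l s))) else 0)"
      unfolding a_coef_expand[OF l] sum_distrib_right by (rule sum.cong) simp_all
  qed
  also have "\<dots> = (\<Sum>P\<in>Fam r n a k. \<Sum>l\<in>?L. if l = LP r n a k P then WP r P * (\<Prod>s<depth r a k. int (x (l s))) else 0)"
    by (rule sum.swap)
  also have "\<dots> = (\<Sum>P\<in>Fam r n a k. WP r P * (\<Prod>s<depth r a k. int (x (LP r n a k P s))))"
    using finL LP_in by (intro sum.cong refl) (simp add: sum.delta)
  finally show ?thesis .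
qed


lemma Pk_prod: "Pk r n a k x = (\<Prod>t<r. \<Sum>pp\<in>col_group (lam_plus a k t) \<times> col_group (lam_minus n a k t).
      sign (fst pp) * sign (snd pp) * (\<Prod>q<depth_tau a k t.
         Psi a x t (row_of (lam_plus a k t) (fst pp q)) (row_of (lam_minus n a k t) (snd pp q))))"
proof -
  let ?G = "\<lambda>t pp. sign (fst pp) * sign (snd pp) * (\<Prod>q<depth_tau a k t.
         Psi a x t (row_of (lam_plus a k t) (fst pp q)) (row_of (lam_minus n a k t) (snd pp q)))"
  have e: "WP r P * (\<Prod>s<depth r a k. int (x (LP r n a k P s))) = (\<Prod>t<r. ?G t (P t))" for P
  proof -
    have "(\<Prod>s<depth r a k. int (x (LP r n a k P s))) = (\<Prod>t<r. \<Prod>q<depth_tau a k t. int (x (LP r n a k P (offset a k t + q))))"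
      unfolding depth_offset by (rule prod_blocks)
    also have "\<dots> = (\<Prod>t<r. \<Prod>q<depth_tau a k t. Psi a x t (row_of (lam_plus a k t) (fst (P t) q)) (row_of (lam_minus n a k t) (snd (P t) q)))"
      by (intro prod.cong refl) (simp add: LP_off Psi_def)
    finally show ?thesis unfolding WP_def by (simp add: prod.distrib)
  qed
  have "Pk r n a k x = (\<Sum>P\<in>Fam r n a k. \<Prod>t<r. ?G t (P t))" unfolding Pk_expand e ..
  also have "\<dots> = (\<Prod>t<r. \<Sum>pp\<in>col_group (lam_plus a k t) \<times> col_group (lam_minus n a k t). ?G t pp)"
    unfolding Fam_def by (rule prod_sum_PiE[symmetric]) (auto intro: finite_col_group)
  finally show ?thesis .
qed

lemma block_cols:
  assumes t: "t < r"
  shows "(\<Sum>pp\<in>col_group (lam_plus a k t) \<times> col_group (lam_minus n a k t).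
      sign (fst pp) * sign (snd pp) * (\<Prod>q<depth_tau a k t.
         Psi a x t (row_of (lam_plus a k t) (fst pp q)) (row_of (lam_minus n a k t) (snd pp q))))
    = (\<Prod>c<depth_tau a k t. Gdet (Psi a x t) (colrows (lam_plus a k t) c))"
proof -
  let ?lp = "lam_plus a k t"
  let ?C = "col_group ?lp"
  have CC: "col_group (lam_minus n a k t) = ?C" by (rule lm_lp_agree(1)[OF sw an t])
  have "(\<Sum>pp\<in>col_group (lam_plus a k t) \<times> col_group (lam_minus n a k t).
      sign (fst pp) * sign (snd pp) * (\<Prod>q<depth_tau a k t.
         Psi a x t (row_of ?lp (fst pp q)) (row_of (lam_minus n a k t) (snd pp q))))
    = (\<Sum>p\<in>?C. \<Sum>p'\<in>?C. sign p * sign p' * (\<Prod>q<depth_tau a k t.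
         Psi a x t (row_of ?lp (p q)) (row_of (lam_minus n a k t) (p' q))))"
    unfolding CC sum.cartesian_product by (rule sum.cong) (auto simp: case_prod_beta)
  also have "\<dots> = (\<Sum>p\<in>?C. \<Sum>p'\<in>?C. of_int (sign p * sign p') * (\<Prod>q\<in>{0..<sum_list ?lp}.
         Psi a x t (row_of ?lp (p q)) (row_of ?lp (p' q))))"
  proof (intro sum.cong refl)
    fix p p' assume p: "p \<in> ?C" and p': "p' \<in> ?C"
    have "(\<Prod>q<depth_tau a k t. Psi a x t (row_of ?lp (p q)) (row_of (lam_minus n a k t) (p' q)))
        = (\<Prod>q<depth_tau a k t. Psi a x t (row_of ?lp (p q)) (row_of ?lp (p' q)))"
    proof (rule prod.cong[OF refl])
      fix q assume "q \<in> {..<depth_tau a k t}"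
      then have "p' q < depth_tau a k t" using perm_lt[OF t p'] by simp
      then show "Psi a x t (row_of ?lp (p q)) (row_of (lam_minus n a k t) (p' q))
          = Psi a x t (row_of ?lp (p q)) (row_of ?lp (p' q))"
        using lm_lp_agree(2)[OF sw an t] by simp
    qed
    then show "sign p * sign p' * (\<Prod>q<depth_tau a k t. Psi a x t (row_of ?lp (p q)) (row_of (lam_minus n a k t) (p' q)))
        = of_int (sign p * sign p') * (\<Prod>q\<in>{0..<sum_list ?lp}. Psi a x t (row_of ?lp (p q)) (row_of ?lp (p' q)))"
      using sum_lp[OF sw an t] by (simp add: atLeast0LessThan)
  qed
  also have "\<dots> = (\<Prod>c<sum_list ?lp. Gdet (Psi a x t) (colrows ?lp c))" by (rule col_factor)
  finally show ?thesis using sum_lp[OF sw an t] by simp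
qed

lemma Pk_cols: "Pk r n a k x = (\<Prod>t<r. \<Prod>c<depth_tau a k t. Gdet (Psi a x t) (colrows (lam_plus a k t) c))"
  unfolding Pk_prod by (rule prod.cong[OF refl]) (simp add: block_cols)

end


section \<open>Column heights\<close>

lemma downclosed:
  assumes "finite S" "\<And>i j. i \<in> S \<Longrightarrow> j < i \<Longrightarrow> j \<in> S"
  shows "S = {..<card S}"
proof (cases "S = {}")
  case True
  then show ?thesis by simp
next
  case False
  define M where "M = Max S"
  have MS: "M \<in> S" using Max_in[OF assms(1) False] by (simp add: M_def)
  have e: "S = {..<Suc M}"
  proof
    show "S \<subseteq> {..<Suc M}" using Max_ge[OF assms(1)] by (auto simp: less_Suc_eq_le M_def)
    show "{..<Suc M} \<subseteq> S"
    proof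
      fix y assume "y \<in> {..<Suc M}"
      then have "y = M \<or> y < M" by auto
      then show "y \<in> S" using MS assms(2) by auto
    qed
  qed
  then have "card S = Suc M" by simp
  with e show ?thesis by simp
qed

context
  fixes r n :: nat and a :: "nat \<Rightarrow> nat" and k :: "nat \<Rightarrow> nat \<Rightarrow> int"
  assumes sw: "symmetric_weight r n a k" and an: "\<forall>t<r. a t \<le> n"
begin

lemma lp_dec:
  assumes t: "t < r" and ij: "i' \<le> i" "i < a t"
  shows "lam_plus a k t ! i \<le> lam_plus a k t ! i'"
  using ij
proof (induction i)
  case 0
  then show ?case by simp
next
  case (Suc i)
  show ?case
  proof (cases "i' = Suc i")
    case False
    then have ih: "lam_plus a k t ! i \<le> lam_plus a k t ! i'" using Suc by simp
    have atn: "a t \<le> n" using an t by simp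
    have "k t (Suc i + 1) \<le> k t (Suc i)"
      using k_dec[OF sw an t, of "Suc i"] Suc.prems atn by simp
    moreover have "k t (Suc i + 1) \<ge> 0" using k_nonneg[OF sw an t, of "Suc i + 1"] Suc.prems atn by simp
    ultimately have "lam_plus a k t ! Suc i \<le> lam_plus a k t ! i" using Suc.prems by (simp add: nth_lp)
    then show ?thesis using ih by simp
  qed simp
qed

lemma colrows_eq:
  assumes t: "t < r"
  shows "colrows (lam_plus a k t) c = {..<card (colrows (lam_plus a k t) c)}"
proof (rule downclosed[OF finite_colrows])
  fix i j assume "i \<in> colrows (lam_plus a k t) c" "j < i"
  then have "i < a t" "c < lam_plus a k t ! i" "j < i" by (auto simp: colrows_def)
  moreover have "lam_plus a k t ! i \<le> lam_plus a k t ! j" using lp_dec[OF t, of j i] calculation by simp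
  ultimately show "j \<in> colrows (lam_plus a k t) c" by (simp add: colrows_def)
qed

lemma card_colrows_le: "card (colrows (lam_plus a k t) c) \<le> a t"
proof -
  have "colrows (lam_plus a k t) c \<subseteq> {..<a t}" by (auto simp: colrows_def)
  then show ?thesis using card_mono[of "{..<a t}"] by fastforce
qed

definition Nh :: "nat \<Rightarrow> nat \<Rightarrow> nat" where
  "Nh t h = card {c \<in> {..<depth_tau a k t}. card (colrows (lam_plus a k t) c) = h}"

lemma cols_power:
  assumes t: "t < r"
  shows "(\<Prod>c<depth_tau a k t. Gdet \<Psi> (colrows (lam_plus a k t) c)) = (\<Prod>h\<in>{..a t}. Gdet \<Psi> {..<h} ^ Nh t h)"
proof -
  let ?H = "\<lambda>c. card (colrows (lam_plus a k t) c)"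
  let ?D = "{..<depth_tau a k t}"
  have "(\<Prod>c\<in>?D. Gdet \<Psi> (colrows (lam_plus a k t) c)) = (\<Prod>c\<in>?D. Gdet \<Psi> {..<?H c})"
    by (rule prod.cong[OF refl]) (subst colrows_eq[OF t], simp)
  also have "\<dots> = (\<Prod>h\<in>?H ` ?D. \<Prod>c\<in>{c\<in>?D. ?H c = h}. Gdet \<Psi> {..<?H c})"
    by (rule prod.image_gen) simp
  also have "\<dots> = (\<Prod>h\<in>?H ` ?D. Gdet \<Psi> {..<h} ^ Nh t h)"
  proof (rule prod.cong[OF refl])
    fix h
    have "(\<Prod>c\<in>{c\<in>?D. ?H c = h}. Gdet \<Psi> {..<?H c}) = (\<Prod>c\<in>{c\<in>?D. ?H c = h}. Gdet \<Psi> {..<h})"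
      by (rule prod.cong) auto
    then show "(\<Prod>c\<in>{c\<in>?D. ?H c = h}. Gdet \<Psi> {..<?H c}) = Gdet \<Psi> {..<h} ^ Nh t h"
      by (simp add: Nh_def)
  qed
  also have "\<dots> = (\<Prod>h\<in>{..a t}. Gdet \<Psi> {..<h} ^ Nh t h)"
  proof (rule prod.mono_neutral_left)
    show "?H ` ?D \<subseteq> {..a t}" using card_colrows_le by auto
    show "\<forall>h\<in>{..a t} - ?H ` ?D. Gdet \<Psi> {..<h} ^ Nh t h = 1"
    proof
      fix h assume "h \<in> {..a t} - ?H ` ?D"
      then have "{c\<in>?D. ?H c = h} = {}" by auto
      then have "Nh t h = 0" unfolding Nh_def by (metis card.empty)
      then show "Gdet \<Psi> {..<h} ^ Nh t h = 1" by simp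
    qed
  qed simp
  finally show ?thesis .
qed

lemma Nh_val:
  assumes t: "t < r" and h: "1 \<le> h" "h \<le> a t"
  shows "int (Nh t h) = (if h < a t then k t h - k t (h + 1) else k t h)"
proof -
  have atn: "a t \<le> n" using an t by simp
  let ?lp = "lam_plus a k t"
  let ?H = "\<lambda>c. card (colrows ?lp c)"
  let ?D = "{..<depth_tau a k t}"
  have lph: "?lp ! (h - 1) = nat (k t h)" using h by (simp add: nth_lp)
  have mem: "j \<in> colrows ?lp c \<longleftrightarrow> j < ?H c" for j c
    using colrows_eq[OF t, of c] by (metis lessThan_iff)
  have iff: "?H c = h \<longleftrightarrow> c < ?lp ! (h - 1) \<and> \<not> (h < a t \<and> c < ?lp ! h)" for c
  proof -
    have "?H c = h \<longleftrightarrow> h - 1 < ?H c \<and> \<not> h < ?H c" using h by auto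
    also have "\<dots> \<longleftrightarrow> (h - 1) \<in> colrows ?lp c \<and> h \<notin> colrows ?lp c" using mem by simp
    also have "\<dots> \<longleftrightarrow> c < ?lp ! (h - 1) \<and> \<not> (h < a t \<and> c < ?lp ! h)"
      using h by (simp add: colrows_def) linarith
    finally show ?thesis .
  qed
  have bnd: "?lp ! (h - 1) \<le> depth_tau a k t"
    using elem_le_sum_list[of "h - 1" ?lp] h sum_lp[OF sw an t] by simp
  show ?thesis
  proof (cases "h < a t")
    case True
    have lph1: "?lp ! h = nat (k t (h + 1))" using True by (simp add: nth_lp)
    have set: "{c \<in> ?D. ?H c = h} = {?lp ! h..<?lp ! (h - 1)}"
    proof (rule Set.set_eqI)
      fix c
      have "c \<in> {c \<in> ?D. ?H c = h} \<longleftrightarrow> c < depth_tau a k t \<and> (c < ?lp ! (h - 1) \<and> \<not> (h < a t \<and> c < ?lp ! h))"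
        using iff[of c] by simp
      also have "\<dots> \<longleftrightarrow> c \<in> {?lp ! h..<?lp ! (h - 1)}" using bnd True by auto
      finally show "c \<in> {c \<in> ?D. ?H c = h} \<longleftrightarrow> c \<in> {?lp ! h..<?lp ! (h - 1)}" .
    qed
    have dec: "k t (h + 1) \<le> k t h" using k_dec[OF sw an t, of h] h True atn by simp
    have nn: "k t (h + 1) \<ge> 0" using k_nonneg[OF sw an t, of "h + 1"] True atn by simp
    show ?thesis unfolding Nh_def set using True lph lph1 dec nn by simp
  next
    case False
    have set: "{c \<in> ?D. ?H c = h} = {..<?lp ! (h - 1)}"
    proof (rule Set.set_eqI)
      fix c
      have "c \<in> {c \<in> ?D. ?H c = h} \<longleftrightarrow> c < depth_tau a k t \<and> (c < ?lp ! (h - 1) \<and> \<not> (h < a t \<and> c < ?lp ! h))"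
        using iff[of c] by simp
      also have "\<dots> \<longleftrightarrow> c \<in> {..<?lp ! (h - 1)}" using bnd False by auto
      finally show "c \<in> {c \<in> ?D. ?H c = h} \<longleftrightarrow> c \<in> {..<?lp ! (h - 1)}" .
    qed
    have nn: "k t h \<ge> 0" using k_nonneg[OF sw an t, of h] h atn by simp
    show ?thesis unfolding Nh_def set using False lph nn by simp
  qed
qed

lemma Pk_power: "Pk r n a k x = (\<Prod>t<r. \<Prod>h\<in>{..a t}. Gdet (Psi a x t) {..<h} ^ Nh t h)"
  unfolding Pk_cols[OF sw an] by (rule prod.cong[OF refl]) (simp add: cols_power)

end




lemma euler_int:
  fixes y :: int and p m :: nat
  assumes p: "prime p" and nd: "\<not> int p dvd y"
  shows "[y ^ (p ^ m * (p - 1)) = 1] (mod (int p ^ (m + 1)))"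
proof -
  let ?M = "p ^ (m + 1)"
  have Mpos: "int ?M > 0" using p prime_gt_0_nat by simp
  define z where "z = nat (y mod int ?M)"
  have zy: "int z = y mod int ?M" using Mpos by (simp add: z_def)
  have cy: "coprime (int p) y" using prime_imp_coprime[of "int p" y] p nd by simp
  then have "coprime y (int p ^ (m + 1))" by (simp add: coprime_commute)
  then have "coprime y (int ?M)" by simp
  then have "coprime (y mod int ?M) (int ?M)" using coprime_mod_left_iff[of "int ?M" y] Mpos by linarith
  then have "coprime (int z) (int ?M)" using zy by simp
  then have cz: "coprime z ?M" by simp
  have "[z ^ totient ?M = 1] (mod ?M)" by (rule euler_theorem[OF cz])
  moreover have "totient ?M = p ^ m * (p - 1)" using totient_prime_power_Suc[OF p, of m] by simp
  ultimately have "[z ^ (p ^ m * (p - 1)) = 1] (mod ?M)" by simp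
  then have "[int z ^ (p ^ m * (p - 1)) = 1] (mod int ?M)"
    by (metis cong_int_iff of_nat_1 of_nat_power)
  moreover have "[y ^ (p ^ m * (p - 1)) = int z ^ (p ^ m * (p - 1))] (mod int ?M)"
    by (rule cong_pow) (simp add: zy cong_sym)
  ultimately show ?thesis by (simp add: cong_trans)
qed

lemma pow_cong_lt:
  fixes y :: int and u v m p :: nat
  assumes p: "prime p" and c: "[int u = int v] (mod (int p ^ m * (int p - 1)))" and uv: "u < v" and mu: "m < u"
  shows "[y ^ u = y ^ v] (mod int p ^ (m + 1))"
proof -
  let ?\<phi> = "p ^ m * (p - 1)"
  have "int p ^ m * (int p - 1) = int ?\<phi>" using prime_gt_0_nat[OF p] by (simp add: of_nat_diff)
  then have "int ?\<phi> dvd int v - int u" using c by (metis cong_iff_dvd_diff cong_sym)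
  then have "int ?\<phi> dvd int (v - u)" using uv by (simp add: of_nat_diff)
  then have "?\<phi> dvd v - u" by (simp only: int_dvd_int_iff)
  then obtain t where t: "v - u = ?\<phi> * t" by blast
  have v: "v = u + ?\<phi> * t" using t uv by simp
  show ?thesis
  proof (cases "int p dvd y")
    case True
    have "int p ^ (m + 1) dvd int p ^ u" by (rule le_imp_power_dvd) (use mu in simp)
    also have "\<dots> dvd y ^ u" using True by (rule dvd_power_same)
    finally have 1: "[y ^ u = 0] (mod int p ^ (m + 1))" by (simp add: cong_0_iff)
    have "int p ^ (m + 1) dvd int p ^ v" by (rule le_imp_power_dvd) (use mu uv in simp)
    also have "\<dots> dvd y ^ v" using True by (rule dvd_power_same)
    finally have 2: "[y ^ v = 0] (mod int p ^ (m + 1))" by (simp add: cong_0_iff)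
    show ?thesis using 1 2 by (metis cong_sym cong_trans)
  next
    case False
    have e: "[y ^ ?\<phi> = 1] (mod int p ^ (m + 1))" by (rule euler_int[OF p False])
    have "[(y ^ ?\<phi>) ^ t = 1 ^ t] (mod int p ^ (m + 1))" by (rule cong_pow[OF e])
    then have "[y ^ u * (y ^ ?\<phi>) ^ t = y ^ u * 1 ^ t] (mod int p ^ (m + 1))" by (rule cong_scalar_left)
    moreover have "y ^ u * (y ^ ?\<phi>) ^ t = y ^ v" by (simp only: v power_add power_mult)
    ultimately have "[y ^ v = y ^ u] (mod int p ^ (m + 1))" by simp
    then show ?thesis by (rule cong_sym)
  qed
qed

lemma pow_cong:
  fixes y :: int and u v m p :: nat
  assumes p: "prime p" and c: "[int u = int v] (mod (int p ^ m * (int p - 1)))"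
    and mu: "u \<noteq> v \<Longrightarrow> m < u \<and> m < v"
  shows "[y ^ u = y ^ v] (mod int p ^ (m + 1))"
proof (cases u v rule: linorder_cases)
  case less
  then show ?thesis using pow_cong_lt[OF p c less] mu by simp
next
  case equal
  then show ?thesis by simp
next
  case greater
  have "[y ^ v = y ^ u] (mod int p ^ (m + 1))"
    using pow_cong_lt[OF p cong_sym[OF c] greater] mu greater by simp
  then show ?thesis by (rule cong_sym)
qed


lemma Pk_cong:
  fixes r n m p :: nat and a :: "nat \<Rightarrow> nat" and k k' :: "nat \<Rightarrow> nat \<Rightarrow> int"
  assumes an: "\<forall>t<r. a t \<le> n"
    and p: "prime p"
    and sw: "symmetric_weight r n a k" and sw': "symmetric_weight r n a k'"
    and cg: "\<forall>t<r. \<forall>i. 1 \<le> i \<and> i \<le> n \<longrightarrow> [k t i = k' t i] (mod (int p ^ m * (int p - 1)))"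
    and h1: "\<forall>t<r. \<forall>i. 1 \<le> i \<and> i < a t \<and> k t i - k t (i+1) \<noteq> k' t i - k' t (i+1)
           \<longrightarrow> min (k t i - k t (i+1)) (k' t i - k' t (i+1)) > int m"
    and h2: "\<forall>t<r. 1 \<le> a t \<and> k t (a t) \<noteq> k' t (a t) \<longrightarrow> min (k t (a t)) (k' t (a t)) > int m"
  shows "[Pk r n a k x = Pk r n a k' x] (mod int p ^ (m + 1))"
proof -
  let ?M = "int p ^ m * (int p - 1)"
  have "[(\<Prod>t<r. \<Prod>h\<in>{..a t}. Gdet (Psi a x t) {..<h} ^ Nh a k t h)
       = (\<Prod>t<r. \<Prod>h\<in>{..a t}. Gdet (Psi a x t) {..<h} ^ Nh a k' t h)] (mod int p ^ (m + 1))"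
  proof (rule cong_prod, rule cong_prod)
    fix t h assume t: "t \<in> {..<r}" and h: "h \<in> {..a t}"
    show "[Gdet (Psi a x t) {..<h} ^ Nh a k t h = Gdet (Psi a x t) {..<h} ^ Nh a k' t h] (mod int p ^ (m + 1))"
    proof (cases "h = 0")
      case True
      then show ?thesis by (simp add: Gdet_empty)
    next
      case False
      then have h1': "1 \<le> h" "h \<le> a t" using h by auto
      have tr: "t < r" using t by simp
      have atn: "a t \<le> n" using an tr by simp
      note v = Nh_val[OF sw an tr h1'] Nh_val[OF sw' an tr h1']
      show ?thesis
      proof (rule pow_cong[OF p])
        show "[int (Nh a k t h) = int (Nh a k' t h)] (mod ?M)"
        proof (cases "h < a t")
          case True
          have "[k t h = k' t h] (mod ?M)" "[k t (h+1) = k' t (h+1)] (mod ?M)"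
            using cg tr h1' True atn by auto
          then show ?thesis unfolding v using True by (simp add: cong_diff)
        next
          case False
          have "[k t h = k' t h] (mod ?M)" using cg tr h1' atn by auto
          then show ?thesis unfolding v using False by simp
        qed
        assume ne: "Nh a k t h \<noteq> Nh a k' t h"
        show "m < Nh a k t h \<and> m < Nh a k' t h"
        proof (cases "h < a t")
          case True
          then have "k t h - k t (h+1) \<noteq> k' t h - k' t (h+1)" using ne v by (metis of_nat_eq_iff)
          then have "min (k t h - k t (h+1)) (k' t h - k' t (h+1)) > int m" using h1 tr h1' True by auto
          then show ?thesis using v True by simp
        next
          case False
          then have ha: "h = a t" using h1' by simp
          then have "k t (a t) \<noteq> k' t (a t)" using ne v False by (metis of_nat_eq_iff)
          then have "min (k t (a t)) (k' t (a t)) > int m" using h2 tr h1' ha by auto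
          then show ?thesis using v False ha by simp
        qed
      qed
    qed
  qed
  then show ?thesis unfolding Pk_power[OF sw an] Pk_power[OF sw' an] .
qed


lemma theta_kappa_Op:
  assumes "set vs = Evee r n a" "distinct vs" "depth r a k \<le> D"
  shows "theta_kappa r n a k f \<alpha> = Op vs (Evee r n a) D
     (\<lambda>J. \<Sum>l\<in>({0..<depth r a k} \<rightarrow>\<^sub>E Evee r n a). a_coef r n a k l * cseq l (depth r a k) J) f \<alpha>"
proof -
  let ?L = "{0..<depth r a k} \<rightarrow>\<^sub>E Evee r n a"
  have "theta_kappa r n a k f \<alpha> = (\<Sum>l\<in>?L. of_int (a_coef r n a k l) * Op vs (Evee r n a) D (cseq l (depth r a k)) f \<alpha>)"
    unfolding theta_kappa_def
  proof (rule sum.cong[OF refl])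
    fix l assume l: "l \<in> ?L"
    have "theta_seq l (depth r a k) f = Op vs (Evee r n a) D (cseq l (depth r a k)) f"
      by (rule theta_seq_Op) (use assms l finite_Evee in \<open>auto simp: PiE_iff\<close>)
    then show "of_int (a_coef r n a k l) * theta_seq l (depth r a k) f \<alpha>
        = of_int (a_coef r n a k l) * Op vs (Evee r n a) D (cseq l (depth r a k)) f \<alpha>" by simp
  qed
  also have "\<dots> = Op vs (Evee r n a) D (\<lambda>J. \<Sum>l\<in>?L. a_coef r n a k l * cseq l (depth r a k) J) f \<alpha>"
    by (rule lincomb_Op)
  finally show ?thesis .
qed

lemma ev_Pk:
  assumes "depth r a k \<le> D"
  shows "ev (Evee r n a) D (\<lambda>J. \<Sum>l\<in>({0..<depth r a k} \<rightarrow>\<^sub>E Evee r n a). a_coef r n a k l * cseq l (depth r a k) J) x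
     = Pk r n a k x"
proof -
  let ?L = "{0..<depth r a k} \<rightarrow>\<^sub>E Evee r n a"
  have "ev (Evee r n a) D (\<lambda>J. \<Sum>l\<in>?L. a_coef r n a k l * cseq l (depth r a k) J) x
      = (\<Sum>l\<in>?L. a_coef r n a k l * ev (Evee r n a) D (cseq l (depth r a k)) x)"
    by (rule lincomb_ev[symmetric])
  also have "\<dots> = Pk r n a k x"
    unfolding Pk_def
  proof (rule sum.cong[OF refl])
    fix l assume l: "l \<in> ?L"
    have "ev (Evee r n a) D (cseq l (depth r a k)) x = (\<Prod>i<depth r a k. int (x (l i)))"
      by (rule ev_cseq) (use assms l finite_Evee in \<open>auto simp: PiE_iff\<close>)
    then show "a_coef r n a k l * ev (Evee r n a) D (cseq l (depth r a k)) x
        = a_coef r n a k l * (\<Prod>s<depth r a k. int (x (l s)))" by simp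
  qed
  finally show ?thesis .
qed

theorem mainTheorem8:
  fixes r n m p :: nat and a :: "nat \<Rightarrow> nat" and k k' :: "nat \<Rightarrow> nat \<Rightarrow> int"
  assumes "0 < r" and "0 < n"
    and "\<forall>t<r. a t \<le> n"
    and "prime p" and "n < p"
    and "symmetric_weight r n a k" and "symmetric_weight r n a k'"
    and "1 \<le> m"
    and "\<forall>t<r. \<forall>i. 1 \<le> i \<and> i \<le> n \<longrightarrow> [k t i = k' t i] (mod (int p ^ m * (int p - 1)))"
    and "\<forall>t<r. \<forall>i. 1 \<le> i \<and> i < a t \<and> k t i - k t (i+1) \<noteq> k' t i - k' t (i+1)
           \<longrightarrow> min (k t i - k t (i+1)) (k' t i - k' t (i+1)) > int m"
    and "\<forall>t<r. 1 \<le> a t \<and> k t (a t) \<noteq> k' t (a t) \<longrightarrow> min (k t (a t)) (k' t (a t)) > int m"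
  shows "\<forall>(f :: 'c::comm_ring_1 pseries) \<alpha>. (\<forall>x. x \<notin> Evee r n a \<longrightarrow> \<alpha> x = 0) \<longrightarrow>
           (\<exists>c. theta_kappa r n a k f \<alpha> - theta_kappa r n a k' f \<alpha> = of_nat (p ^ (m+1)) * c)"
proof (intro allI impI)
  fix f :: "'c::comm_ring_1 pseries" and \<alpha> :: "var \<Rightarrow> nat"
  let ?S = "Evee r n a"
  define D where "D = max (depth r a k) (depth r a k')"
  obtain vs where vs: "set vs = ?S" "distinct vs" using finite_distinct_list[OF finite_Evee] by blast
  define C where "C = (\<lambda>J. \<Sum>l\<in>({0..<depth r a k} \<rightarrow>\<^sub>E Evee r n a). a_coef r n a k l * cseq l (depth r a k) J)"
  define C' where "C' = (\<lambda>J. \<Sum>l\<in>({0..<depth r a k'} \<rightarrow>\<^sub>E Evee r n a). a_coef r n a k' l * cseq l (depth r a k') J)"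
  have D1: "depth r a k \<le> D" and D2: "depth r a k' \<le> D" by (simp_all add: D_def)
  have t1: "theta_kappa r n a k f \<alpha> = Op vs ?S D C f \<alpha>"
    unfolding C_def by (rule theta_kappa_Op[OF vs D1])
  have t2: "theta_kappa r n a k' f \<alpha> = Op vs ?S D C' f \<alpha>"
    unfolding C'_def by (rule theta_kappa_Op[OF vs D2])
  have dv: "int (p ^ (m + 1)) dvd (C J - C' J)" if J: "J \<in> Box ?S D" for J
  proof (rule coeff_dvd[OF finite_Evee _ J])
    fix x assume x: "x \<in> Box ?S D"
    have "ev ?S D (\<lambda>J. C J - C' J) x = ev ?S D C x - ev ?S D C' x" by (rule ev_diff[symmetric])
    also have "\<dots> = Pk r n a k x - Pk r n a k' x"
      unfolding C_def C'_def ev_Pk[OF D1] ev_Pk[OF D2] ..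
    finally have e: "ev ?S D (\<lambda>J. C J - C' J) x = Pk r n a k x - Pk r n a k' x" .
    have "[Pk r n a k x = Pk r n a k' x] (mod int p ^ (m + 1))"
      by (rule Pk_cong) (use assms in auto)
    then have "int p ^ (m + 1) dvd Pk r n a k x - Pk r n a k' x" by (simp add: cong_iff_dvd_diff)
    then show "int (p ^ (m + 1)) dvd ev ?S D (\<lambda>J. C J - C' J) x" unfolding e by simp
  qed
  have "theta_kappa r n a k f \<alpha> - theta_kappa r n a k' f \<alpha> = Op vs ?S D (\<lambda>J. C J - C' J) f \<alpha>"
    unfolding t1 t2 by (rule Op_diff)
  moreover have "\<exists>y. Op vs ?S D (\<lambda>J. C J - C' J) f \<alpha> = (of_nat (p ^ (m + 1)) :: 'c) * y"
    by (rule Op_dvd) (rule dv)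
  ultimately show "\<exists>c. theta_kappa r n a k f \<alpha> - theta_kappa r n a k' f \<alpha> = of_nat (p ^ (m+1)) * c" by simp
qed


end
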